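(* Let $G=A*_C B$ with generating set $S=(A\cup B)\setminus\{1\}$, let $a_1,a_2\in A\setminus C$ with $a_2\notin Ca_1C$, and let $b\in B\setminus C$. For $i\ge0$ let $$w_i=(a_1b)^{10^i}(a_1^{-1}b^{-1})^{10^i}(a_2b)^{10^i}(a_2^{-1}b^{-1})^{10^i}(a_1b)^{4\cdot10^i}(a_1^{-1}b^{-1})^{4\cdot10^i}(a_2b)^{4\cdot10^i}(a_2^{-1}b^{-1})^{4\cdot10^i}.$$ Then: (1) $c_{w_i}(\overline{w_i^n})=n$ for all $n\ge1$, $i\ge0$; (2) $c_{w_i^{-1}}(\overline{w_i^n})=0$ for all $n\ge1$, $i\ge0$; (3) $c_{w_j}(\overline{w_i^n})=0$ for all $j>i\ge0$, $n\ge1$; (4) $c_{w_j^{-1}}(\overline{w_i^n})=0$ for all $j>i\ge0$, $n\ge1$.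
   Context: Words are finite sequences of letters in $S$; $\bar u$ is the element represented, $|u|$ the length, $u^{-1}$ the formal inverse word, $|g|$ the word length of $g\in G$. For a nonempty word $w$ and a word $u$, $|u|_w$ is the maximal number of pairwise non-overlapping occurrences of $w$ as a contiguous subword of $u$, and $c_w(g)=|g|-\min\{|v|-|v|_w:\bar v=g\}$. *)

theory Defs
  imports "HOL-Algebra.Algebra"
begin

text \<open>Internal amalgamated free product: G = A *_C B, via the normal form theorem
  (A, B subgroups generating G, C = A \<inter> B, and every nonempty product of elements
  alternately from A - C and B - C is nontrivial).\<close>

definition alternating :: "'g set \<Rightarrow> 'g set \<Rightarrow> 'g set \<Rightarrow> 'g list \<Rightarrow> bool" where
  "alternating A B C gs \<longleftrightarrow>
     (\<forall>i<length gs. gs ! i \<in> (A - C) \<union> (B - C)) \<and>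
     (\<forall>i. Suc i < length gs \<longrightarrow>
        \<not> (gs ! i \<in> A \<and> gs ! Suc i \<in> A) \<and> \<not> (gs ! i \<in> B \<and> gs ! Suc i \<in> B))"

definition word_eval :: "('g, 'b) monoid_scheme \<Rightarrow> 'g list \<Rightarrow> 'g" where
  "word_eval G u = foldr (\<lambda>x y. x \<otimes>\<^bsub>G\<^esub> y) u \<one>\<^bsub>G\<^esub>"

definition amalgamated_product ::
  "('g, 'b) monoid_scheme \<Rightarrow> 'g set \<Rightarrow> 'g set \<Rightarrow> 'g set \<Rightarrow> bool" where
  "amalgamated_product G A B C \<longleftrightarrow>
     group G \<and> subgroup A G \<and> subgroup B G \<and> C = A \<inter> B \<and>
     generate G (A \<union> B) = carrier G \<and>
     (\<forall>gs. gs \<noteq> [] \<and> alternating A B C gs \<longrightarrow> word_eval G gs \<noteq> \<one>\<^bsub>G\<^esub>)"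

definition word_inv :: "('g, 'b) monoid_scheme \<Rightarrow> 'g list \<Rightarrow> 'g list" where
  "word_inv G u = rev (map (\<lambda>x. inv\<^bsub>G\<^esub> x) u)"

definition word_length :: "('g, 'b) monoid_scheme \<Rightarrow> 'g set \<Rightarrow> 'g \<Rightarrow> nat" where
  "word_length G S g = (LEAST n. \<exists>u. set u \<subseteq> S \<and> length u = n \<and> word_eval G u = g)"

definition occ_count :: "'a list \<Rightarrow> 'a list \<Rightarrow> nat" where
  "occ_count w u = Max {k. \<exists>ps :: nat list. length ps = k \<and>
      (\<forall>i<k. ps ! i + length w \<le> length u \<and> take (length w) (drop (ps ! i) u) = w) \<and>
      (\<forall>i. Suc i < k \<longrightarrow> ps ! i + length w \<le> ps ! Suc i)}"

definition cw :: "('g, 'b) monoid_scheme \<Rightarrow> 'g set \<Rightarrow> 'g list \<Rightarrow> 'g \<Rightarrow> int" where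
  "cw G S w g = int (word_length G S g) -
     int (LEAST m. \<exists>v. set v \<subseteq> S \<and> word_eval G v = g \<and> m = length v - occ_count w v)"

definition wpow :: "'a list \<Rightarrow> nat \<Rightarrow> 'a list" where
  "wpow u n = concat (replicate n u)"

definition w_word :: "('g, 'b) monoid_scheme \<Rightarrow> 'g \<Rightarrow> 'g \<Rightarrow> 'g \<Rightarrow> nat \<Rightarrow> 'g list" where
  "w_word G a1 a2 b i =
     (let N = 10 ^ i; ai = (\<lambda>x. inv\<^bsub>G\<^esub> x); M = 4 * 10 ^ i in
      wpow [a1, b] N @ wpow [ai a1, ai b] N @ wpow [a2, b] N @ wpow [ai a2, ai b] N @
      wpow [a1, b] M @ wpow [ai a1, ai b] M @ wpow [a2, b] M @ wpow [ai a2, ai b] M)"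

end

theory Submission imports Defs begin

lemma successively_nth:
  "successively P xs \<longleftrightarrow> (\<forall>i. Suc i < length xs \<longrightarrow> P (xs!i) (xs!Suc i))"
proof (induction P xs rule: successively.induct)
  case (3 P x y xs)
  show ?case
  proof
    assume h: "successively P (x # y # xs)"
    then have hh: "P x y \<and> successively P (y # xs)" by simp
    then have h1: "P x y" by blast
    have h2: "\<forall>i. Suc i < length (y # xs) \<longrightarrow> P ((y # xs) ! i) ((y # xs) ! Suc i)"
      using hh 3 by blast
    show "\<forall>i. Suc i < length (x # y # xs) \<longrightarrow> P ((x # y # xs) ! i) ((x # y # xs) ! Suc i)"
    proof (intro allI impI)
      fix i assume i: "Suc i < length (x # y # xs)"
      show "P ((x # y # xs) ! i) ((x # y # xs) ! Suc i)"
      proof (cases i)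
        case 0 then show ?thesis using h1 by simp
      next
        case (Suc j)
        have "Suc j < length (y # xs)" using i Suc by simp
        then have "P ((y # xs) ! j) ((y # xs) ! Suc j)" using h2 by blast
        then show ?thesis using Suc by simp
      qed
    qed
  next
    assume h: "\<forall>i. Suc i < length (x # y # xs) \<longrightarrow> P ((x # y # xs) ! i) ((x # y # xs) ! Suc i)"
    have "P x y" using h[rule_format, of 0] by simp
    moreover have "\<forall>i. Suc i < length (y # xs) \<longrightarrow> P ((y # xs) ! i) ((y # xs) ! Suc i)"
    proof (intro allI impI)
      fix i assume "Suc i < length (y # xs)"
      then have "Suc (Suc i) < length (x # y # xs)" by simp
      then have "P ((x # y # xs) ! Suc i) ((x # y # xs) ! Suc (Suc i))" using h by blast
      then show "P ((y # xs) ! i) ((y # xs) ! Suc i)" by simp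
    qed
    ultimately show "successively P (x # y # xs)" using 3 by simp
  qed
qed auto

lemma word_eval_Nil[simp]: "word_eval G [] = \<one>\<^bsub>G\<^esub>" by (simp add: word_eval_def)
lemma word_eval_Cons[simp]: "word_eval G (x#xs) = x \<otimes>\<^bsub>G\<^esub> word_eval G xs" by (simp add: word_eval_def)

locale amal = group G for G :: "('g, 'b) monoid_scheme" (structure) +
  fixes A B C :: "'g set"
  assumes subA: "subgroup A G" and subB: "subgroup B G" and Cdef: "C = A \<inter> B"
    and nf: "\<And>gs. gs \<noteq> [] \<Longrightarrow> alternating A B C gs \<Longrightarrow> word_eval G gs \<noteq> \<one>"
begin

definition "Ls = (A - C) \<union> (B - C)"
definition "ok x y \<longleftrightarrow> \<not> (x \<in> A \<and> y \<in> A) \<and> \<not> (x \<in> B \<and> y \<in> B)"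
definition "sm x y \<longleftrightarrow> (x \<in> A \<longleftrightarrow> y \<in> A) \<and> (x \<in> B \<longleftrightarrow> y \<in> B)"
definition "dc x y \<longleftrightarrow> (\<exists>c1\<in>C. \<exists>c2\<in>C. x = c1 \<otimes> y \<otimes> c2)"

lemma A_carr: "A \<subseteq> carrier G" using subA subgroup.subset by blast
lemma B_carr: "B \<subseteq> carrier G" using subB subgroup.subset by blast
lemma C_A: "C \<subseteq> A" and C_B: "C \<subseteq> B" using Cdef by auto
lemma C_carr: "C \<subseteq> carrier G" using C_A A_carr by auto
lemma one_C[simp]: "\<one> \<in> C" using Cdef subA subB subgroup.one_closed by blast
lemma inv_C: "c \<in> C \<Longrightarrow> inv c \<in> C"
  by (simp add: Cdef subgroup.m_inv_closed[OF subA] subgroup.m_inv_closed[OF subB])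
lemma mult_C: "c \<in> C \<Longrightarrow> d \<in> C \<Longrightarrow> c \<otimes> d \<in> C"
  by (simp add: Cdef subgroup.m_closed[OF subA] subgroup.m_closed[OF subB])
lemma Ls_carr: "Ls \<subseteq> carrier G" using A_carr B_carr Ls_def by auto
lemma Ls_iff: "x \<in> Ls \<longleftrightarrow> (x \<in> A \<and> x \<notin> B) \<or> (x \<in> B \<and> x \<notin> A)"
  using Cdef Ls_def by auto

lemma sm_Ls: "sm x y \<Longrightarrow> x \<in> Ls \<longleftrightarrow> y \<in> Ls" by (auto simp: sm_def Ls_iff)
lemma sm_ok1: "sm x y \<Longrightarrow> ok x z \<longleftrightarrow> ok y z" by (auto simp: sm_def ok_def)
lemma sm_ok2: "sm x y \<Longrightarrow> ok z x \<longleftrightarrow> ok z y" by (auto simp: sm_def ok_def)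
lemma sm_sym: "sm x y \<Longrightarrow> sm y x" by (auto simp: sm_def)
lemma sm_trans: "sm x y \<Longrightarrow> sm y z \<Longrightarrow> sm x z" by (auto simp: sm_def)
lemma ok_sym: "ok x y \<longleftrightarrow> ok y x" by (auto simp: ok_def)

lemma sub_cancel_right: assumes "subgroup H G" "x \<in> carrier G" "c \<in> H"
  shows "x \<otimes> c \<in> H \<longleftrightarrow> x \<in> H"
proof
  assume h: "x \<otimes> c \<in> H"
  have ic: "inv c \<in> H" using subgroup.m_inv_closed[OF assms(1)] assms by simp
  have cc: "c \<in> carrier G" using subgroup.subset[OF assms(1)] assms by blast
  have "x = x \<otimes> c \<otimes> inv c" using assms cc by (simp add: m_assoc)
  also have "\<dots> \<in> H" using subgroup.m_closed[OF assms(1)] h ic by simp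
  finally show "x \<in> H" .
next
  assume "x \<in> H" then show "x \<otimes> c \<in> H" using subgroup.m_closed[OF assms(1)] assms by simp
qed

lemma sub_cancel_left: assumes "subgroup H G" "x \<in> carrier G" "c \<in> H"
  shows "c \<otimes> x \<in> H \<longleftrightarrow> x \<in> H"
proof
  assume h: "c \<otimes> x \<in> H"
  have ic: "inv c \<in> H" using subgroup.m_inv_closed[OF assms(1)] assms by simp
  have cc: "c \<in> carrier G" using subgroup.subset[OF assms(1)] assms by blast
  have "x = inv c \<otimes> (c \<otimes> x)" using assms cc by (simp add: m_assoc[symmetric])
  also have "\<dots> \<in> H" using subgroup.m_closed[OF assms(1)] h ic by simp
  finally show "x \<in> H" .
next
  assume "x \<in> H" then show "c \<otimes> x \<in> H" using subgroup.m_closed[OF assms(1)] assms by simp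
qed

lemma sub_inv_iff: assumes "subgroup H G" "x \<in> carrier G"
  shows "inv x \<in> H \<longleftrightarrow> x \<in> H"
proof
  assume "inv x \<in> H" then have "inv (inv x) \<in> H" using subgroup.m_inv_closed[OF assms(1)] by blast
  then show "x \<in> H" using assms by simp
next
  assume "x \<in> H" then show "inv x \<in> H" using subgroup.m_inv_closed[OF assms(1)] assms by simp
qed

lemma sm_mult_right: assumes "x \<in> carrier G" "c \<in> C" shows "sm (x \<otimes> c) x"
  unfolding sm_def using sub_cancel_right[OF subA assms(1)] sub_cancel_right[OF subB assms(1)]
    assms(2) C_A C_B by blast

lemma sm_mult_left: assumes "x \<in> carrier G" "c \<in> C" shows "sm (c \<otimes> x) x"
  unfolding sm_def using sub_cancel_left[OF subA assms(1)] sub_cancel_left[OF subB assms(1)]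
    assms(2) C_A C_B by blast

lemma sm_inv: assumes "x \<in> carrier G" shows "sm (inv x) x"
  unfolding sm_def using sub_inv_iff[OF subA assms] sub_inv_iff[OF subB assms] by blast

lemma alt_iff: "alternating A B C gs \<longleftrightarrow> set gs \<subseteq> Ls \<and> successively ok gs"
  unfolding alternating_def successively_nth ok_def Ls_def
  by (simp add: subset_code(1) all_set_conv_all_nth)

lemma alt_nth: "alternating A B C gs \<longleftrightarrow>
   (\<forall>i<length gs. gs!i \<in> Ls) \<and> (\<forall>i. Suc i < length gs \<longrightarrow> ok (gs!i) (gs!Suc i))"
  unfolding alternating_def ok_def Ls_def by simp

lemma alt_sm1: assumes "list_all2 sm xs ys" "alternating A B C xs" shows "alternating A B C ys"
proof -
  have len: "length xs = length ys" and s: "\<And>i. i < length xs \<Longrightarrow> sm (xs!i) (ys!i)"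
    using assms(1) by (auto simp: list_all2_conv_all_nth)
  have a: "\<And>i. i<length xs \<Longrightarrow> xs!i \<in> Ls" and b: "\<And>i. Suc i < length xs \<Longrightarrow> ok (xs!i) (xs!Suc i)"
    using assms(2) by (auto simp: alt_nth)
  show ?thesis unfolding alt_nth
  proof (intro conjI allI impI)
    fix i assume "i < length ys" then show "ys!i \<in> Ls" using a s len sm_Ls by metis
  next
    fix i assume i: "Suc i < length ys"
    have "ok (xs!i) (xs!Suc i)" using b i len by simp
    then have "ok (ys!i) (xs!Suc i)" using s[of i] i len sm_ok1 by simp
    then show "ok (ys!i) (ys!Suc i)" using s[of "Suc i"] i len sm_ok2 by simp
  qed
qed

lemma alt_sm: "list_all2 sm xs ys \<Longrightarrow> alternating A B C xs \<longleftrightarrow> alternating A B C ys"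
proof -
  assume h: "list_all2 sm xs ys"
  then have "list_all2 sm ys xs" by (simp add: list_all2_conv_all_nth sm_sym)
  then show ?thesis using h alt_sm1 by blast
qed

lemma alt_append: "alternating A B C (xs @ ys) \<longleftrightarrow>
   alternating A B C xs \<and> alternating A B C ys \<and> (xs = [] \<or> ys = [] \<or> ok (last xs) (hd ys))"
  unfolding alt_iff by (auto simp: successively_append_iff)

lemma word_eval_carr: "set xs \<subseteq> carrier G \<Longrightarrow> word_eval G xs \<in> carrier G"
  by (induction xs) auto

lemma word_eval_append: "set xs \<subseteq> carrier G \<Longrightarrow> set ys \<subseteq> carrier G \<Longrightarrow>
   word_eval G (xs @ ys) = word_eval G xs \<otimes> word_eval G ys"
  by (induction xs) (auto simp: m_assoc word_eval_carr)

lemma word_eval_snoc: "set xs \<subseteq> carrier G \<Longrightarrow> x \<in> carrier G \<Longrightarrow>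
   word_eval G (xs @ [x]) = word_eval G xs \<otimes> x"
  by (simp add: word_eval_append)

lemma word_inv_Cons: "word_inv G (x#xs) = word_inv G xs @ [inv x]"
  by (simp add: word_inv_def)
lemma word_inv_snoc: "word_inv G (xs @ [x]) = inv x # word_inv G xs"
  by (simp add: word_inv_def)
lemma set_word_inv: "set xs \<subseteq> carrier G \<Longrightarrow> set (word_inv G xs) \<subseteq> carrier G"
  by (auto simp: word_inv_def)

lemma word_eval_inv: "set xs \<subseteq> carrier G \<Longrightarrow> word_eval G (word_inv G xs) = inv (word_eval G xs)"
proof (induction xs)
  case Nil then show ?case by (simp add: word_inv_def)
next
  case (Cons x xs)
  have x: "x \<in> carrier G" and xs: "set xs \<subseteq> carrier G" using Cons.prems by auto
  have "word_eval G (word_inv G (x # xs)) = word_eval G (word_inv G xs) \<otimes> inv x"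
    unfolding word_inv_Cons using x xs set_word_inv word_eval_snoc by simp
  also have "\<dots> = inv (word_eval G xs) \<otimes> inv x" using Cons.IH xs by simp
  also have "\<dots> = inv (x \<otimes> word_eval G xs)"
    using x xs word_eval_carr by (simp add: inv_mult_group)
  finally show ?case by simp
qed

lemma alt_word_inv: assumes "set xs \<subseteq> carrier G"
  shows "alternating A B C (word_inv G xs) \<longleftrightarrow> alternating A B C xs"
proof -
  have "list_all2 sm (map (\<lambda>x. inv x) xs) xs" using assms
    by (induction xs) (auto simp: sm_inv)
  then have f1: "alternating A B C (map (\<lambda>x. inv x) xs) \<longleftrightarrow> alternating A B C xs" by (rule alt_sm)
  have f2: "alternating A B C (rev ys) \<longleftrightarrow> alternating A B C ys" for ys
  proof -
    have e: "(\<lambda>x y. ok y x) = ok" by (auto simp: fun_eq_iff ok_def)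
    show ?thesis unfolding alt_iff by (simp add: e) (simp only: e)
  qed
  show ?thesis unfolding word_inv_def by (rule trans[OF f2 f1])
qed

lemma alt_carr: "alternating A B C xs \<Longrightarrow> set xs \<subseteq> carrier G"
  using Ls_carr unfolding alt_iff by blast


lemma sm_refl: "sm x x" by (simp add: sm_def)

lemma alt_snoc_sm: assumes "alternating A B C (xs @ [x])" "sm y x"
  shows "alternating A B C (xs @ [y])"
proof -
  have "list_all2 sm (xs @ [y]) (xs @ [x])"
    using assms(2) by (intro list_all2_appendI) (auto simp: list_all2_conv_all_nth sm_refl)
  then show ?thesis using assms(1) alt_sm by blast
qed

lemma alt_prefix: "alternating A B C (xs @ ys) \<Longrightarrow> alternating A B C xs"
  using alt_append by blast

lemma not_ok_sm: "x \<in> Ls \<Longrightarrow> y \<in> Ls \<Longrightarrow> \<not> ok x y \<Longrightarrow> sm x y"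
  by (auto simp: Ls_iff ok_def sm_def)

lemma nf_unique:
  assumes "alternating A B C Xs" "alternating A B C Ys" "c \<in> C" "word_eval G Xs = word_eval G Ys \<otimes> c"
  shows "length Xs = length Ys \<and> (\<forall>k<length Xs. dc (Xs!k) (Ys!k))"
  using assms
proof (induction Xs arbitrary: Ys c rule: rev_induct)
  case Nil
  show ?case
  proof (cases Ys rule: rev_exhaust)
    case Nil then show ?thesis by simp
  next
    case (snoc Yp y)
    have Yc: "set Yp \<subseteq> carrier G" "y \<in> carrier G" "y \<in> Ls" using alt_carr[OF Nil.prems(2)] snoc
      Nil.prems(2) by (auto simp: alt_iff)
    have cc: "c \<in> carrier G" using Nil.prems(3) C_carr by blast
    have smy: "sm (y \<otimes> c) y" using sm_mult_right Yc cc Nil.prems(3) by blast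
    have alt: "alternating A B C (Yp @ [y \<otimes> c])" using alt_snoc_sm Nil.prems(2) snoc smy by blast
    have "word_eval G (Yp @ [y \<otimes> c]) = word_eval G Yp \<otimes> y \<otimes> c"
      using Yc cc by (simp add: word_eval_snoc m_assoc word_eval_carr)
    also have "\<dots> = \<one>" using Nil.prems(4) snoc Yc by (simp add: word_eval_snoc)
    finally show ?thesis using nf[OF _ alt] by simp
  qed
next
  case (snoc x Xp)
  have Xc: "set Xp \<subseteq> carrier G" "x \<in> carrier G" "x \<in> Ls" using alt_carr[OF snoc.prems(1)]
      snoc.prems(1) by (auto simp: alt_iff)
  have cc: "c \<in> carrier G" using snoc.prems(3) C_carr by blast
  have altX': "alternating A B C Xp" using alt_prefix snoc.prems(1) by blast
  show ?case
  proof (cases Ys rule: rev_exhaust)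
    case Nil
    have smx: "sm (x \<otimes> inv c) x" using sm_mult_right Xc cc snoc.prems(3) inv_C by blast
    have alt: "alternating A B C (Xp @ [x \<otimes> inv c])" using alt_snoc_sm snoc.prems(1) smx by blast
    have e: "word_eval G Xp \<otimes> x = c" using snoc.prems(4) Nil Xc cc by (simp add: word_eval_snoc)
    have "word_eval G (Xp @ [x \<otimes> inv c]) = (word_eval G Xp \<otimes> x) \<otimes> inv c"
      using Xc cc by (simp add: word_eval_snoc m_assoc word_eval_carr)
    also have "\<dots> = \<one>" using e cc by simp
    finally show ?thesis using nf[OF _ alt] by simp
  next
    case (snoc Yp y)
    have Yc: "set Yp \<subseteq> carrier G" "y \<in> carrier G" "y \<in> Ls" using alt_carr[OF snoc.prems(2)] snoc
      snoc.prems(2) by (auto simp: alt_iff)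
    have altY': "alternating A B C Yp" using alt_prefix snoc.prems(2) snoc by blast
    define yc where "yc = y \<otimes> c"
    have ycc: "yc \<in> carrier G" using Yc cc yc_def by simp
    have smy: "sm yc y" using sm_mult_right Yc cc snoc.prems(3) yc_def by blast
    have eX: "word_eval G Xp \<in> carrier G" and eY: "word_eval G Yp \<in> carrier G"
      using Xc Yc word_eval_carr by auto
    have eq: "word_eval G Xp \<otimes> x = word_eval G Yp \<otimes> yc"
      using snoc.prems(4) snoc Xc Yc cc yc_def eY by (simp add: word_eval_snoc m_assoc)
    show ?thesis
    proof (cases "ok x y")
      case True
      define Z where "Z = (Xp @ [x]) @ word_inv G (Yp @ [yc])"
      have altYc: "alternating A B C (Yp @ [yc])" using alt_snoc_sm snoc.prems(2) snoc smy by blast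
      have altI: "alternating A B C (word_inv G (Yp @ [yc]))"
        using alt_word_inv altYc alt_carr by blast
      have "ok x (inv yc)" using True sm_ok2 sm_inv ycc smy sm_trans by metis
      then have altZ: "alternating A B C Z" unfolding Z_def
        using iffD2[OF alt_append, of "Xp @ [x]" "word_inv G (Yp @ [yc])"] snoc.prems(1) altI
        by (simp add: word_inv_snoc)
      have "word_eval G Z = word_eval G (Xp @ [x]) \<otimes> inv (word_eval G (Yp @ [yc]))"
        unfolding Z_def using Xc Yc ycc eX eY
        by (simp add: word_eval_append word_eval_inv set_word_inv word_eval_snoc m_assoc)
      also have "\<dots> = (word_eval G Yp \<otimes> yc) \<otimes> inv (word_eval G Yp \<otimes> yc)"
        using Xc Yc ycc eq by (simp add: word_eval_snoc)
      also have "\<dots> = \<one>" using eY ycc by simp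
      finally show ?thesis using nf[OF _ altZ] Z_def by simp
    next
      case False
      define z where "z = yc \<otimes> inv x"
      have zc: "z \<in> carrier G" using z_def ycc Xc by simp
      have eX': "word_eval G Xp = word_eval G Yp \<otimes> z"
      proof -
        have "word_eval G Xp = (word_eval G Xp \<otimes> x) \<otimes> inv x" using eX Xc by (simp add: m_assoc)
        also have "\<dots> = word_eval G Yp \<otimes> z" using eq z_def eY ycc Xc by (simp add: m_assoc)
        finally show ?thesis .
      qed
      have smxy: "sm x y" using not_ok_sm Xc Yc False by blast
      show ?thesis
      proof (cases "z \<in> C")
        case True
        have IH: "length Xp = length Yp \<and> (\<forall>k<length Xp. dc (Xp!k) (Yp!k))"
          using snoc.IH[OF altX' altY' True eX'] .
        have "x = inv z \<otimes> y \<otimes> c"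
        proof -
          have "inv z = x \<otimes> inv yc" using z_def ycc Xc by (simp add: inv_mult_group)
          then have "inv z \<otimes> y \<otimes> c = x \<otimes> inv yc \<otimes> yc" using yc_def Xc ycc Yc cc by (simp add: m_assoc)
          also have "\<dots> = x" using Xc ycc by (simp add: m_assoc)
          finally show ?thesis by simp
        qed
        then have "dc x y" unfolding dc_def using True inv_C snoc.prems(3) by blast
        then show ?thesis using IH snoc by (auto simp: nth_append)
      next
        case False
        have zAB: "(z \<in> A \<and> y \<in> A) \<or> (z \<in> B \<and> y \<in> B)"
        proof -
          have "(x \<in> A \<and> y \<in> A) \<or> (x \<in> B \<and> y \<in> B)" using \<open>\<not> ok x y\<close> ok_def by blast
          moreover have "yc \<in> A \<longleftrightarrow> y \<in> A" "yc \<in> B \<longleftrightarrow> y \<in> B" using smy sm_def by auto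
          moreover have "inv x \<in> A \<longleftrightarrow> x \<in> A" "inv x \<in> B \<longleftrightarrow> x \<in> B"
            using sub_inv_iff[OF subA Xc(2)] sub_inv_iff[OF subB Xc(2)] by auto
          ultimately show ?thesis unfolding z_def
            using subgroup.m_closed[OF subA] subgroup.m_closed[OF subB] by metis
        qed
        have smz: "sm z y" using zAB False Yc(3) Ls_iff[of y] Cdef unfolding sm_def by blast
        define Z where "Z = Xp @ word_inv G (Yp @ [z])"
        have altYz: "alternating A B C (Yp @ [z])" using alt_snoc_sm snoc.prems(2) snoc smz by blast
        have altI: "alternating A B C (word_inv G (Yp @ [z]))"
          using alt_word_inv altYz alt_carr by blast
        have okj: "Xp \<noteq> [] \<Longrightarrow> ok (last Xp) (inv z)"
        proof -
          assume ne: "Xp \<noteq> []"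
          have "ok (last Xp) x" using snoc.prems(1) ne unfolding alt_append by simp
          moreover have "sm (inv z) x" using sm_inv[OF zc] smz smxy sm_trans sm_sym by metis
          ultimately show ?thesis using sm_ok2 by blast
        qed
        have altZ: "alternating A B C Z" unfolding Z_def alt_append
          using altX' altI okj by (simp add: word_inv_snoc, blast)
        have "word_eval G Z = word_eval G Xp \<otimes> inv (word_eval G (Yp @ [z]))"
          unfolding Z_def using Xc Yc zc eX eY
          by (simp add: word_eval_append word_eval_inv set_word_inv word_eval_snoc m_assoc)
        also have "\<dots> = (word_eval G Yp \<otimes> z) \<otimes> inv (word_eval G Yp \<otimes> z)"
          using Yc zc eX' by (simp add: word_eval_snoc)
        also have "\<dots> = \<one>" using eY zc by simp
        finally show ?thesis using nf[OF _ altZ] Z_def by (simp add: word_inv_snoc)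
      qed
    qed
  qed
qed


definition step :: "'g list \<times> 'g \<Rightarrow> 'g \<Rightarrow> 'g list \<times> 'g" where
  "step st s = (let xs = fst st; c = snd st; s' = c \<otimes> s in
     if s' \<in> C then (xs, s')
     else if xs = [] \<or> ok (last xs) s' then (xs @ [s'], \<one>)
     else if last xs \<otimes> s' \<in> C then (butlast xs, last xs \<otimes> s')
     else (butlast xs @ [last xs \<otimes> s'], \<one>))"

definition runf :: "'g list \<times> 'g \<Rightarrow> 'g list \<Rightarrow> 'g list \<times> 'g" where
  "runf st v = fold (\<lambda>s st. step st s) v st"

definition "inv_st st \<longleftrightarrow> alternating A B C (fst st) \<and> snd st \<in> C"

lemma runf_Nil[simp]: "runf st [] = st" by (simp add: runf_def)
lemma runf_Cons[simp]: "runf st (s # v) = runf (step st s) v" by (simp add: runf_def)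
lemma runf_append: "runf st (u @ v) = runf (runf st u) v" by (simp add: runf_def)

lemma AB_carr: "s \<in> A \<union> B \<Longrightarrow> s \<in> carrier G" using A_carr B_carr by blast

lemma Ls_notC: "x \<in> Ls \<Longrightarrow> x \<notin> C" using Ls_iff[of x] Cdef by blast

lemma step_inv:
  assumes st: "inv_st (xs, c)" and s: "s \<in> A \<union> B"
  shows "inv_st (step (xs, c) s) \<and>
    word_eval G (fst (step (xs, c) s)) \<otimes> snd (step (xs, c) s) = word_eval G xs \<otimes> c \<otimes> s"
proof -
  have alt: "alternating A B C xs" and cC: "c \<in> C" using st by (auto simp: inv_st_def)
  have cc: "c \<in> carrier G" using cC C_carr by blast
  have sc: "s \<in> carrier G" using s AB_carr by blast
  have xsc: "set xs \<subseteq> carrier G" using alt alt_carr by blast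
  have ex: "word_eval G xs \<in> carrier G" using xsc word_eval_carr by blast
  define s' where "s' = c \<otimes> s"
  have s'c: "s' \<in> carrier G" using s'_def cc sc by simp
  have sms: "sm s' s" using sm_mult_left sc cC s'_def by blast
  have sAB: "s' \<in> A \<union> B" using sms s unfolding sm_def by blast
  show ?thesis
  proof (cases "s' \<in> C")
    case True
    then show ?thesis using alt by (simp add: step_def Let_def s'_def[symmetric] inv_st_def m_assoc ex cc sc)
  next
    case nC: False
    have s'L: "s' \<in> Ls" using nC sAB Ls_def by blast
    show ?thesis
    proof (cases "xs = [] \<or> ok (last xs) s'")
      case True
      have "alternating A B C (xs @ [s'])"
        using iffD2[OF alt_append, of xs "[s']"] alt True s'L by (auto simp: alt_iff)
      then show ?thesis using nC True
        by (simp add: step_def Let_def s'_def[symmetric] inv_st_def word_eval_snoc xsc s'c m_assoc ex cc sc)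
    next
      case False
      then have ne: "xs \<noteq> []" and nok: "\<not> ok (last xs) s'" by auto
      obtain xs' l where xs: "xs = xs' @ [l]" using ne by (metis append_butlast_last_id)
      have lL: "l \<in> Ls" using alt xs by (auto simp: alt_iff)
      have lc: "l \<in> carrier G" using lL Ls_carr by blast
      have xs'c: "set xs' \<subseteq> carrier G" using xsc xs by auto
      have altxs': "alternating A B C xs'" using alt xs alt_prefix by blast
      have ev: "word_eval G xs = word_eval G xs' \<otimes> l" using xs xs'c lc word_eval_snoc by simp
      have ex': "word_eval G xs' \<in> carrier G" using xs'c word_eval_carr by blast
      define z where "z = l \<otimes> s'"
      have zc: "z \<in> carrier G" using z_def lc s'c by simp
      have evz: "word_eval G xs \<otimes> c \<otimes> s = word_eval G xs' \<otimes> z"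
        using ev z_def s'_def ex' lc cc sc by (simp add: m_assoc)
      show ?thesis
      proof (cases "z \<in> C")
        case True
        then show ?thesis using nC ne nok xs altxs' evz
          by (simp add: step_def Let_def s'_def[symmetric] z_def[symmetric] inv_st_def)
      next
        case zC: False
        have "(l \<in> A \<and> s' \<in> A) \<or> (l \<in> B \<and> s' \<in> B)" using nok xs ok_def by simp
        then have "(z \<in> A \<and> l \<in> A) \<or> (z \<in> B \<and> l \<in> B)" unfolding z_def
          using subgroup.m_closed[OF subA] subgroup.m_closed[OF subB] by blast
        then have smz: "sm z l" using zC lL Ls_iff[of l] Cdef unfolding sm_def by blast
        have "alternating A B C (xs' @ [z])" using alt_snoc_sm alt xs smz by blast
        then show ?thesis using nC ne nok xs zC evz zc ex'
          by (simp add: step_def Let_def s'_def[symmetric] z_def[symmetric] inv_st_def word_eval_snoc xs'c)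
      qed
    qed
  qed
qed

lemma step_inv': "inv_st st \<Longrightarrow> s \<in> A \<union> B \<Longrightarrow> inv_st (step st s)"
  using step_inv[of "fst st" "snd st" s] by simp

lemma runf_inv: "inv_st st \<Longrightarrow> set v \<subseteq> A \<union> B \<Longrightarrow> inv_st (runf st v)"
proof (induction v arbitrary: st)
  case Nil then show ?case by simp
next
  case (Cons s v) then show ?case using step_inv' by simp
qed

lemma runf_eval: "inv_st st \<Longrightarrow> set v \<subseteq> A \<union> B \<Longrightarrow>
   word_eval G (fst (runf st v)) \<otimes> snd (runf st v) = word_eval G (fst st) \<otimes> snd st \<otimes> word_eval G v"
proof (induction v arbitrary: st)
  case Nil
  have "word_eval G (fst st) \<otimes> snd st \<in> carrier G"
    using Nil.prems alt_carr word_eval_carr C_carr by (auto simp: inv_st_def)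
  then show ?case by simp
next
  case (Cons s v)
  have sc: "s \<in> carrier G" using Cons.prems AB_carr by auto
  have vc: "set v \<subseteq> carrier G" using Cons.prems AB_carr by auto
  have i1: "inv_st (step st s)" using step_inv' Cons.prems by simp
  have e1: "word_eval G (fst (step st s)) \<otimes> snd (step st s) = word_eval G (fst st) \<otimes> snd st \<otimes> s"
    using step_inv[of "fst st" "snd st" s] Cons.prems by simp
  have c0: "word_eval G (fst st) \<otimes> snd st \<in> carrier G"
    using Cons.prems alt_carr word_eval_carr C_carr by (auto simp: inv_st_def)
  show ?case using Cons.IH[OF i1] Cons.prems e1 c0 sc vc word_eval_carr by (simp add: m_assoc)
qed

lemma step_len: "length (fst (step st s)) \<le> Suc (length (fst st))"
  by (auto simp: step_def Let_def)

lemma runf_len: "length (fst (runf st v)) \<le> length (fst st) + length v"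
proof (induction v arbitrary: st)
  case Nil then show ?case by simp
next
  case (Cons s v)
  show ?case using Cons.IH[of "step st s"] step_len[of st s] by simp
qed

end

definition validp :: "'a list \<Rightarrow> 'a list \<Rightarrow> nat list \<Rightarrow> bool" where
  "validp w u ps \<longleftrightarrow> (\<forall>i<length ps. ps ! i + length w \<le> length u \<and> take (length w) (drop (ps ! i) u) = w) \<and>
      (\<forall>i. Suc i < length ps \<longrightarrow> ps ! i + length w \<le> ps ! Suc i)"

lemma occ_set_eq: "{k. \<exists>ps :: nat list. length ps = k \<and>
      (\<forall>i<k. ps ! i + length w \<le> length u \<and> take (length w) (drop (ps ! i) u) = w) \<and>
      (\<forall>i. Suc i < k \<longrightarrow> ps ! i + length w \<le> ps ! Suc i)} = length ` {ps. validp w u ps}"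
  unfolding validp_def by auto

lemma validp_mono_idx: assumes "validp w u ps" "i < j" "j < length ps"
  shows "ps ! i + length w \<le> ps ! j"
  using assms(2,3)
proof (induction j)
  case 0 then show ?case by simp
next
  case (Suc j)
  have step: "ps ! j + length w \<le> ps ! Suc j" using assms(1) Suc.prems unfolding validp_def by blast
  show ?case
  proof (cases "i = j")
    case True then show ?thesis using step by simp
  next
    case False
    then have "ps ! i + length w \<le> ps ! j" using Suc by simp
    then show ?thesis using step by simp
  qed
qed

lemma validp_ge: assumes "validp w u ps" "i < length ps" shows "i * length w \<le> ps ! i"
  using assms(2)
proof (induction i)
  case 0 then show ?case by simp
next
  case (Suc i)
  have "ps ! i + length w \<le> ps ! Suc i" using assms(1) Suc.prems unfolding validp_def by blast
  then show ?case using Suc by simp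
qed

lemma validp_len: assumes "validp w u ps" shows "length ps * length w \<le> length u"
proof (cases ps rule: rev_exhaust)
  case Nil then show ?thesis by simp
next
  case (snoc ps' p)
  have k: "length ps' < length ps" using snoc by simp
  have "length ps' * length w \<le> ps ! length ps'" using validp_ge[OF assms k] .
  moreover have "ps ! length ps' + length w \<le> length u" using assms k unfolding validp_def by blast
  ultimately show ?thesis using snoc by simp
qed

lemma occ_finite: assumes "w \<noteq> []" shows "finite (length ` {ps. validp w u ps})"
proof -
  have "length ` {ps. validp w u ps} \<subseteq> {..length u}"
  proof
    fix k assume "k \<in> length ` {ps. validp w u ps}"
    then obtain ps where "validp w u ps" "k = length ps" by blast
    then have "k * length w \<le> length u" using validp_len by blast
    moreover have "length w \<ge> 1" using assms by (cases w) auto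
    ultimately have "k \<le> length u" by (metis dual_order.trans mult_le_mono2 mult.right_neutral)
    then show "k \<in> {..length u}" by simp
  qed
  then show ?thesis using finite_subset by blast
qed

lemma validp_Nil: "validp w u []" by (simp add: validp_def)

lemma occ_ge: "w \<noteq> [] \<Longrightarrow> validp w u ps \<Longrightarrow> length ps \<le> occ_count w u"
  unfolding occ_count_def occ_set_eq by (rule Max_ge) (auto simp: occ_finite)

lemma occ_obtain: assumes "w \<noteq> []" shows "\<exists>ps. validp w u ps \<and> length ps = occ_count w u"
proof -
  have "occ_count w u \<in> length ` {ps. validp w u ps}"
    unfolding occ_count_def occ_set_eq using occ_finite[OF assms] validp_Nil
    by (intro Max_in) auto
  then show ?thesis by auto
qed

lemma occ_le_len: "w \<noteq> [] \<Longrightarrow> occ_count w u * length w \<le> length u"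
  using occ_obtain validp_len by metis

lemma validp_append: assumes "validp w u ps" shows "validp w (u @ v) ps"
  using assms unfolding validp_def by auto

lemma occ_append: "w \<noteq> [] \<Longrightarrow> occ_count w u \<le> occ_count w (u @ v)"
  using occ_obtain occ_ge validp_append by metis

lemma validp_snoc_w: assumes "validp w u ps" shows "validp w (u @ w) (ps @ [length u])"
  unfolding validp_def
proof (rule conjI; intro allI impI)
  fix i assume i: "i < length (ps @ [length u])"
  show "(ps @ [length u]) ! i + length w \<le> length (u @ w) \<and>
        take (length w) (drop ((ps @ [length u]) ! i) (u @ w)) = w"
  proof (cases "i < length ps")
    case True
    then show ?thesis using assms unfolding validp_def by (auto simp: nth_append)
  next
    case False
    then have "i = length ps" using i by simp
    then show ?thesis by (simp add: nth_append)
  qed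
next
  fix i assume i: "Suc i < length (ps @ [length u])"
  show "(ps @ [length u]) ! i + length w \<le> (ps @ [length u]) ! Suc i"
  proof (cases "Suc i < length ps")
    case True
    then show ?thesis using assms unfolding validp_def by (auto simp: nth_append)
  next
    case False
    then have "Suc i = length ps" using i by simp
    then show ?thesis using assms unfolding validp_def by (auto simp: nth_append)
  qed
qed

lemma occ_snoc_w: "w \<noteq> [] \<Longrightarrow> occ_count w u + 1 \<le> occ_count w (u @ w)"
proof -
  assume w: "w \<noteq> []"
  obtain ps where "validp w u ps" "length ps = occ_count w u" using occ_obtain[OF w] by blast
  then show ?thesis using validp_snoc_w occ_ge[OF w] by fastforce
qed

lemma take_drop_butlast: "p + n \<le> length u - 1 \<Longrightarrow> take n (drop p (butlast u)) = take n (drop p u)"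
  by (simp add: butlast_conv_take drop_take min_def)

lemma validp_butlast: assumes "validp w u ps" "w \<noteq> []"
  shows "validp w (butlast u) (butlast ps)"
  unfolding validp_def
proof (rule conjI; intro allI impI)
  fix i assume i: "i < length (butlast ps)"
  then have i1: "i < length ps - 1" "Suc i \<le> length ps - 1" by auto
  have "ps ! i + length w \<le> ps ! (length ps - 1)" using validp_mono_idx[OF assms(1)] i1 by simp
  moreover have "ps ! (length ps - 1) + length w \<le> length u" using assms(1) i1 unfolding validp_def by simp
  moreover have "length w \<ge> 1" using assms(2) by (cases w) auto
  ultimately have le: "ps ! i + length w \<le> length u - 1" by simp
  have "take (length w) (drop (ps ! i) u) = w" using assms(1) i1 unfolding validp_def by simp
  moreover have "take (length w) (drop (ps!i) (butlast u)) = take (length w) (drop (ps!i) u)"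
    by (rule take_drop_butlast[OF le])
  ultimately show "butlast ps ! i + length w \<le> length (butlast u) \<and>
         take (length w) (drop (butlast ps ! i) (butlast u)) = w"
    using le i by (simp add: nth_butlast)
next
  fix i assume "Suc i < length (butlast ps)"
  then show "butlast ps ! i + length w \<le> butlast ps ! Suc i"
    using assms(1) unfolding validp_def by (simp add: nth_butlast)
qed

lemma occ_butlast: "w \<noteq> [] \<Longrightarrow> occ_count w u \<le> occ_count w (butlast u) + 1"
proof -
  assume w: "w \<noteq> []"
  obtain ps where ps: "validp w u ps" "length ps = occ_count w u" using occ_obtain[OF w] by blast
  have "length (butlast ps) \<le> occ_count w (butlast u)" using validp_butlast[OF ps(1) w] occ_ge[OF w] by blast
  then show ?thesis using ps by simp
qed

lemma validp_butlast2: assumes "validp w u ps" "w \<noteq> []" "u \<noteq> []" "last u \<noteq> last w"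
  shows "validp w (butlast u) ps"
  unfolding validp_def
proof (rule conjI; intro allI impI)
  fix i assume i: "i < length ps"
  have a: "ps ! i + length w \<le> length u" and b: "take (length w) (drop (ps ! i) u) = w"
    using assms(1) i unfolding validp_def by auto
  have ne: "ps ! i + length w \<noteq> length u"
  proof
    assume e: "ps ! i + length w = length u"
    then have "take (length w) (drop (ps ! i) u) = drop (ps ! i) u" by simp
    then have "last w = last (drop (ps ! i) u)" using b by simp
    also have "\<dots> = last u" using e assms(2) by (intro last_drop) (cases w; auto)
    finally show False using assms(4) by simp
  qed
  then have le: "ps ! i + length w \<le> length u - 1" using a by simp
  moreover have "take (length w) (drop (ps!i) (butlast u)) = take (length w) (drop (ps!i) u)"
    by (rule take_drop_butlast[OF le])
  ultimately show "ps ! i + length w \<le> length (butlast u) \<and> take (length w) (drop (ps ! i) (butlast u)) = w"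
    using b by simp
next
  fix i assume "Suc i < length ps"
  then show "ps ! i + length w \<le> ps ! Suc i" using assms(1) unfolding validp_def by simp
qed

lemma occ_butlast2: "w \<noteq> [] \<Longrightarrow> u \<noteq> [] \<Longrightarrow> last u \<noteq> last w \<Longrightarrow> occ_count w u \<le> occ_count w (butlast u)"
  using occ_obtain occ_ge validp_butlast2 by metis


lemma validp_snoc_split:
  assumes "validp w v (ps @ [p])"
  shows "p + length w \<le> length v" "v = take p v @ w @ drop (p + length w) v" "validp w (take p v) ps"
proof -
  have a: "p + length w \<le> length v" and b: "take (length w) (drop p v) = w"
    using assms unfolding validp_def by (auto simp: nth_append dest: spec[of _ "length ps"])
  show "p + length w \<le> length v" using a .
  have "drop p v = take (length w) (drop p v) @ drop (length w) (drop p v)" by (rule append_take_drop_id[symmetric])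
  then have "drop p v = w @ drop (p + length w) v" using b by (simp add: add.commute)
  then show "v = take p v @ w @ drop (p + length w) v" by (metis append_take_drop_id)
  show "validp w (take p v) ps"
    unfolding validp_def
  proof (rule conjI; intro allI impI)
    fix i assume i: "i < length ps"
    have "(ps @ [p]) ! i + length w \<le> (ps @ [p]) ! length ps"
      using validp_mono_idx[OF assms, of i "length ps"] i by simp
    then have le: "ps ! i + length w \<le> p" using i by (simp add: nth_append)
    have "take (length w) (drop (ps ! i) v) = w"
      using assms i unfolding validp_def by (auto simp: nth_append dest: spec[of _ i])
    moreover have "take (length w) (drop (ps ! i) (take p v)) = take (length w) (drop (ps ! i) v)"
      using le by (simp add: drop_take min_def)
    ultimately show "ps ! i + length w \<le> length (take p v) \<and> take (length w) (drop (ps ! i) (take p v)) = w"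
      using le a by simp
  next
    fix i assume "Suc i < length ps"
    then show "ps ! i + length w \<le> ps ! Suc i" using assms unfolding validp_def
      by (auto simp: nth_append dest: spec[of _ i])
  qed
qed

context amal begin

lemma step_pot: assumes "T \<noteq> []"
  shows "int (occ_count T (fst st)) \<le> 1 - int (length (fst (step st s))) + int (length (fst st))
          + int (occ_count T (fst (step st s)))"
proof -
  obtain xs c where st: "st = (xs, c)" by (cases st)
  show ?thesis
  proof (cases "c \<otimes> s \<in> C")
    case True then show ?thesis by (simp add: st step_def)
  next
    case nC: False
    show ?thesis
    proof (cases "xs = [] \<or> ok (last xs) (c \<otimes> s)")
      case True
      then show ?thesis using nC occ_append[OF assms, of xs "[c \<otimes> s]"] by (simp add: st step_def)
    next
      case False
      then have ne: "xs \<noteq> []" by auto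
      have ob: "occ_count T xs \<le> occ_count T (butlast xs) + 1" using occ_butlast[OF assms] .
      have lb: "length (butlast xs) + 1 = length xs" using ne by simp
      show ?thesis
      proof (cases "last xs \<otimes> (c \<otimes> s) \<in> C")
        case True
        then show ?thesis using nC False ob lb by (simp add: st step_def)
      next
        case nz: False
        have "occ_count T (butlast xs) \<le> occ_count T (butlast xs @ [last xs \<otimes> (c \<otimes> s)])"
          using occ_append[OF assms] by blast
        then show ?thesis using nC False nz ob lb by (simp add: st step_def)
      qed
    qed
  qed
qed

lemma runf_pot: assumes "T \<noteq> []"
  shows "int (occ_count T (fst st)) - int (length (fst st)) \<le>
    int (length v) - int (length (fst (runf st v))) + int (occ_count T (fst (runf st v)))"
proof (induction v arbitrary: st)
  case Nil then show ?case by simp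
next
  case (Cons s v)
  show ?case using Cons.IH[of "step st s"] step_pot[OF assms, of st s] by simp
qed

lemma runf_append_alt:
  assumes "successively ok (p # ys)" "set ys \<subseteq> Ls"
  shows "runf (xs @ [p], \<one>) ys = (xs @ [p] @ ys, \<one>)"
  using assms
proof (induction ys arbitrary: xs p)
  case Nil then show ?case by simp
next
  case (Cons y ys)
  have yL: "y \<in> Ls" using Cons.prems by simp
  have yc: "y \<in> carrier G" using yL Ls_carr by blast
  have okp: "ok p y" using Cons.prems by simp
  have "step (xs @ [p], \<one>) y = ((xs @ [p]) @ [y], \<one>)"
    using yc Ls_notC[OF yL] okp by (simp add: step_def)
  moreover have "runf ((xs @ [p]) @ [y], \<one>) ys = ((xs @ [p]) @ [y] @ ys, \<one>)"
    using Cons.IH[of y "xs @ [p]"] Cons.prems by simp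
  ultimately show ?case by simp
qed

lemma window:
  assumes Tne: "T \<noteq> []" and alt: "alternating A B C (y # T)" and oky: "ok y (last T)"
    and st: "inv_st st"
  shows "int (occ_count T (fst st)) - int (length (fst st)) + 1 \<le>
    int (length (y # T)) - int (length (fst (runf st (y # T)))) + int (occ_count T (fst (runf st (y # T))))"
proof -
  obtain xs c where stp: "st = (xs, c)" by (cases st)
  have cC: "c \<in> C" using st stp by (simp add: inv_st_def)
  have yL: "y \<in> Ls" and TL: "set T \<subseteq> Ls" and succ: "successively ok (y # T)" using alt by (auto simp: alt_iff)
  have yc: "y \<in> carrier G" using yL Ls_carr by blast
  have smy: "sm (c \<otimes> y) y" using sm_mult_left yc cC by blast
  have cyL: "c \<otimes> y \<in> Ls" using smy yL sm_Ls by blast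
  have cyC: "c \<otimes> y \<notin> C" using Ls_notC[OF cyL] .
  show ?thesis
  proof (cases "xs = [] \<or> ok (last xs) (c \<otimes> y)")
    case True
    have s1: "step st y = (xs @ [c \<otimes> y], \<one>)" using True cyC by (simp add: stp step_def)
    have succ2: "successively ok ((c \<otimes> y) # T)"
      using succ smy Tne by (cases T) (auto simp: sm_ok1)
    have r: "runf st (y # T) = (xs @ [c \<otimes> y] @ T, \<one>)"
      using s1 runf_append_alt[OF succ2 TL, of xs] by simp
    have "occ_count T xs + 1 \<le> occ_count T ((xs @ [c \<otimes> y]) @ T)"
      using occ_append[OF Tne, of xs "[c \<otimes> y]"] occ_snoc_w[OF Tne, of "xs @ [c \<otimes> y]"] by simp
    then show ?thesis using r stp by simp
  next
    case False
    then have ne: "xs \<noteq> []" and nok: "\<not> ok (last xs) (c \<otimes> y)" by auto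
    have lastne: "last xs \<noteq> last T"
    proof
      assume "last xs = last T"
      then have "\<not> ok (last T) y" using nok smy sm_ok2 by metis
      then show False using oky ok_sym by blast
    qed
    have occb: "occ_count T xs \<le> occ_count T (butlast xs)" using occ_butlast2[OF Tne ne lastne] .
    define st1 where "st1 = step st y"
    have f1: "occ_count T (butlast xs) \<le> occ_count T (fst st1) \<and> length (fst st1) \<le> length xs"
    proof (cases "last xs \<otimes> (c \<otimes> y) \<in> C")
      case True then show ?thesis using ne nok cyC by (simp add: st1_def stp step_def)
    next
      case False then show ?thesis using ne nok cyC occ_append[OF Tne, of "butlast xs"]
        by (simp add: st1_def stp step_def)
    qed
    have "int (occ_count T (fst st1)) - int (length (fst st1)) \<le>
      int (length T) - int (length (fst (runf st1 T))) + int (occ_count T (fst (runf st1 T)))"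
      using runf_pot[OF Tne] .
    then show ?thesis using f1 occb stp by (simp add: st1_def)
  qed
qed

lemma main_ineq_gen:
  assumes Tne: "T \<noteq> []" and alt: "alternating A B C (y # T)" and oky: "ok y (last T)"
  shows "validp (y # T) v ps \<Longrightarrow> set v \<subseteq> A \<union> B \<Longrightarrow> inv_st st \<Longrightarrow>
    int (length ps) + int (occ_count T (fst st)) - int (length (fst st)) \<le>
    int (length v) - int (length (fst (runf st v))) + int (occ_count T (fst (runf st v)))"
proof (induction ps arbitrary: v rule: rev_induct)
  case Nil then show ?case using runf_pot[OF Tne] by simp
next
  case (snoc p ps)
  let ?W = "y # T"
  have sp: "p + length ?W \<le> length v" "v = take p v @ ?W @ drop (p + length ?W) v"
    "validp ?W (take p v) ps" using validp_snoc_split[OF snoc.prems(1)] by auto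
  define v1 where "v1 = take p v"
  define v3 where "v3 = drop (p + length ?W) v"
  have vv: "v = v1 @ ?W @ v3" using sp v1_def v3_def by simp
  have v1s: "set v1 \<subseteq> A \<union> B" using snoc.prems(2) vv by auto
  define st1 where "st1 = runf st v1"
  define st2 where "st2 = runf st1 ?W"
  have i1: "inv_st st1" using runf_inv[OF snoc.prems(3) v1s] st1_def by simp
  have IH: "int (length ps) + int (occ_count T (fst st)) - int (length (fst st)) \<le>
    int (length v1) - int (length (fst st1)) + int (occ_count T (fst st1))"
    using snoc.IH[OF _ v1s snoc.prems(3)] sp(3) v1_def st1_def by simp
  have W: "int (occ_count T (fst st1)) - int (length (fst st1)) + 1 \<le>
    int (length ?W) - int (length (fst st2)) + int (occ_count T (fst st2))"
    using window[OF Tne alt oky i1] st2_def by simp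
  have R: "int (occ_count T (fst st2)) - int (length (fst st2)) \<le>
    int (length v3) - int (length (fst (runf st2 v3))) + int (occ_count T (fst (runf st2 v3)))"
    using runf_pot[OF Tne] .
  have "runf st v = runf st2 v3" using vv st1_def st2_def by (simp add: runf_append)
  then show ?case using IH W R vv by simp
qed


lemma inv_st0: "inv_st ([], \<one>)" by (simp add: inv_st_def alternating_def)

lemma Ls_S: "Ls \<subseteq> (A \<union> B) - {\<one>}" using Ls_notC one_C Ls_def by blast

lemma final_state:
  assumes altW: "alternating A B C Wn" and u: "set u \<subseteq> A \<union> B" and ev: "word_eval G u = word_eval G Wn"
  shows "length (fst (runf ([], \<one>) u)) = length Wn \<and>
    (\<forall>k<length Wn. dc (fst (runf ([], \<one>) u) ! k) (Wn ! k))"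
proof -
  define st where "st = runf ([], \<one>) u"
  have i: "inv_st st" using runf_inv[OF inv_st0 u] st_def by simp
  have uc: "set u \<subseteq> carrier G" using u AB_carr by blast
  have e: "word_eval G (fst st) \<otimes> snd st = word_eval G u"
    using runf_eval[OF inv_st0 u] st_def word_eval_carr[OF uc] by simp
  have cC: "snd st \<in> C" and altx: "alternating A B C (fst st)" using i by (auto simp: inv_st_def)
  have cc: "snd st \<in> carrier G" using cC C_carr by blast
  have xc: "word_eval G (fst st) \<in> carrier G" using altx alt_carr word_eval_carr by blast
  have "word_eval G (fst st) = word_eval G Wn \<otimes> inv (snd st)"
  proof -
    have "word_eval G (fst st) = word_eval G (fst st) \<otimes> snd st \<otimes> inv (snd st)"
      using xc cc by (simp add: m_assoc)
    then show ?thesis using e ev by simp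
  qed
  from nf_unique[OF altx altW inv_C[OF cC] this] show ?thesis using st_def by simp
qed

lemma len_lower:
  assumes altW: "alternating A B C Wn" and u: "set u \<subseteq> A \<union> B" and ev: "word_eval G u = word_eval G Wn"
  shows "length Wn \<le> length u"
  using final_state[OF assms] runf_len[of "([], \<one>)" u] by simp

lemma word_length_eq:
  assumes altW: "alternating A B C Wn"
  shows "word_length G ((A \<union> B) - {\<one>}) (word_eval G Wn) = length Wn"
  unfolding word_length_def
proof (rule Least_equality)
  show "\<exists>u. set u \<subseteq> (A \<union> B) - {\<one>} \<and> length u = length Wn \<and> word_eval G u = word_eval G Wn"
    using altW Ls_S by (auto simp: alt_iff)
next
  fix n assume "\<exists>u. set u \<subseteq> (A \<union> B) - {\<one>} \<and> length u = n \<and> word_eval G u = word_eval G Wn"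
  then obtain u where "set u \<subseteq> A \<union> B" "length u = n" "word_eval G u = word_eval G Wn" by blast
  then show "length Wn \<le> n" using len_lower[OF altW] by blast
qed

definition "patfree T Wn \<longleftrightarrow> \<not> (\<exists>q. q + length T \<le> length Wn \<and> (\<forall>k<length T. dc (T ! k) (Wn ! (q + k))))"

lemma occ_bound:
  assumes altW: "alternating A B C Wn" and Tne: "T \<noteq> []" and alt: "alternating A B C (y # T)"
    and oky: "ok y (last T)" and pf: "patfree T Wn"
    and u: "set u \<subseteq> A \<union> B" and ev: "word_eval G u = word_eval G Wn"
  shows "occ_count (y # T) u + length Wn \<le> length u"
proof -
  define xs where "xs = fst (runf ([], \<one>) u)"
  have fs: "length xs = length Wn" "\<forall>k<length Wn. dc (xs ! k) (Wn ! k)"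
    using final_state[OF altW u ev] xs_def by auto
  have o0: "occ_count T xs = 0"
  proof (rule ccontr)
    assume "occ_count T xs \<noteq> 0"
    then obtain ps where ps: "validp T xs ps" "length ps \<noteq> 0" using occ_obtain[OF Tne] by metis
    define q where "q = ps ! 0"
    have q1: "q + length T \<le> length xs" and q2: "take (length T) (drop q xs) = T"
      using ps unfolding validp_def q_def by auto
    have "\<forall>k<length T. dc (T ! k) (Wn ! (q + k))"
    proof (intro allI impI)
      fix k assume k: "k < length T"
      have "T ! k = xs ! (q + k)" using q1 q2 k by (metis nth_drop nth_take add_leD1 le_add_diff_inverse order_less_le_trans)
      then show "dc (T ! k) (Wn ! (q + k))" using fs q1 k by simp
    qed
    then show False using pf q1 fs unfolding patfree_def by auto
  qed
  obtain ps where ps: "validp (y # T) u ps" "length ps = occ_count (y # T) u" using occ_obtain by blast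
  have "int (length ps) + int (occ_count T (fst ([], \<one>))) - int (length (fst ([] :: 'g list, \<one>))) \<le>
    int (length u) - int (length xs) + int (occ_count T xs)"
    using main_ineq_gen[OF Tne alt oky ps(1) u inv_st0] xs_def by simp
  then show ?thesis using ps fs o0 by simp
qed

lemma cw_zero:
  assumes altW: "alternating A B C Wn" and Tne: "T \<noteq> []" and alt: "alternating A B C (y # T)"
    and oky: "ok y (last T)" and pf: "patfree T Wn"
  shows "cw G ((A \<union> B) - {\<one>}) (y # T) (word_eval G Wn) = 0"
proof -
  let ?S = "(A \<union> B) - {\<one>}"
  have WS: "set Wn \<subseteq> ?S" using altW Ls_S by (auto simp: alt_iff)
  have "(LEAST m. \<exists>v. set v \<subseteq> ?S \<and> word_eval G v = word_eval G Wn \<and> m = length v - occ_count (y # T) v)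
      = length Wn"
  proof (rule Least_equality)
    have "occ_count (y # T) Wn + length Wn \<le> length Wn"
      using occ_bound[OF altW Tne alt oky pf] WS by blast
    then show "\<exists>v. set v \<subseteq> ?S \<and> word_eval G v = word_eval G Wn \<and> length Wn = length v - occ_count (y # T) v"
      using WS by (intro exI[of _ Wn]) auto
  next
    fix m assume "\<exists>v. set v \<subseteq> ?S \<and> word_eval G v = word_eval G Wn \<and> m = length v - occ_count (y # T) v"
    then obtain v where "set v \<subseteq> A \<union> B" "word_eval G v = word_eval G Wn" "m = length v - occ_count (y # T) v"
      by blast
    then show "length Wn \<le> m" using occ_bound[OF altW Tne alt oky pf] by fastforce
  qed
  then show ?thesis unfolding cw_def using word_length_eq[OF altW] by simp
qed

end

lemma wpow_0[simp]: "wpow u 0 = []" by (simp add: wpow_def)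
lemma wpow_Suc: "wpow u (Suc n) = u @ wpow u n" by (simp add: wpow_def)
lemma length_wpow[simp]: "length (wpow u n) = n * length u"
  by (induction n) (auto simp: wpow_Suc)
lemma wpow_add: "wpow u (a + b) = wpow u a @ wpow u b"
  by (induction a) (auto simp: wpow_Suc)
lemma set_wpow: "set (wpow u n) \<subseteq> set u"
  by (induction n) (auto simp: wpow_Suc)

lemma validp_wpow: "validp u (wpow u n) (map (\<lambda>k. k * length u) [0..<n])"
  unfolding validp_def
proof (rule conjI; intro allI impI)
  fix i assume i: "i < length (map (\<lambda>k. k * length u) [0..<n])"
  then have i': "i < n" by simp
  have "Suc i \<le> n" using i' by simp
  then have le: "i * length u + length u \<le> n * length u" using mult_le_mono1[of "Suc i" n "length u"] by simp
  have "wpow u n = wpow u i @ u @ wpow u (n - Suc i)"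
    using wpow_add[of u i "Suc (n - Suc i)"] i' by (simp add: wpow_Suc)
  then have "take (length u) (drop (i * length u) (wpow u n)) = u" by simp
  then show "map (\<lambda>k. k * length u) [0..<n] ! i + length u \<le> length (wpow u n) \<and>
         take (length u) (drop (map (\<lambda>k. k * length u) [0..<n] ! i) (wpow u n)) = u"
    using le i' by simp
next
  fix i assume "Suc i < length (map (\<lambda>k. k * length u) [0..<n])"
  then show "map (\<lambda>k. k * length u) [0..<n] ! i + length u \<le> map (\<lambda>k. k * length u) [0..<n] ! Suc i"
    by simp
qed

lemma occ_wpow: assumes "u \<noteq> []" shows "occ_count u (wpow u n) = n"
proof -
  have "n \<le> occ_count u (wpow u n)" using occ_ge[OF assms validp_wpow[of u n]] by simp
  moreover have "occ_count u (wpow u n) * length u \<le> n * length u" using occ_le_len[OF assms, of "wpow u n"] by simp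
  ultimately show ?thesis using assms by simp
qed

context amal begin

lemma cw_n:
  assumes altW: "alternating A B C (wpow W n)" and Wne: "W \<noteq> []"
  shows "cw G ((A \<union> B) - {\<one>}) W (word_eval G (wpow W n)) = int n"
proof -
  let ?S = "(A \<union> B) - {\<one>}"
  let ?L = "length W"
  have L1: "?L \<ge> 1" using Wne by (cases W) auto
  have WS: "set (wpow W n) \<subseteq> ?S" using altW Ls_S by (auto simp: alt_iff)
  have "(LEAST m. \<exists>v. set v \<subseteq> ?S \<and> word_eval G v = word_eval G (wpow W n) \<and> m = length v - occ_count W v)
      = n * ?L - n"
  proof (rule Least_equality)
    show "\<exists>v. set v \<subseteq> ?S \<and> word_eval G v = word_eval G (wpow W n) \<and> n * ?L - n = length v - occ_count W v"
      using WS occ_wpow[OF Wne, of n] by (intro exI[of _ "wpow W n"]) auto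
  next
    fix m assume "\<exists>v. set v \<subseteq> ?S \<and> word_eval G v = word_eval G (wpow W n) \<and> m = length v - occ_count W v"
    then obtain v where v: "set v \<subseteq> A \<union> B" "word_eval G v = word_eval G (wpow W n)" "m = length v - occ_count W v"
      by blast
    have l1: "n * ?L \<le> length v" using len_lower[OF altW v(1) v(2)] by simp
    have l2: "occ_count W v * ?L \<le> length v" using occ_le_len[OF Wne] .
    show "n * ?L - n \<le> m"
    proof (cases "occ_count W v \<le> n")
      case True then show ?thesis using l1 v(3) by linarith
    next
      case False
      define oc where "oc = occ_count W v"
      have "n * (?L - 1) \<le> oc * (?L - 1)" using False oc_def by (intro mult_le_mono1) simp
      moreover have "oc * (?L - 1) = oc * ?L - oc" by (simp add: diff_mult_distrib2)
      moreover have "n * (?L - 1) = n * ?L - n" by (simp add: diff_mult_distrib2)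
      moreover have "oc * ?L \<le> length v" using l2 oc_def by simp
      moreover have "m = length v - oc" using v(3) oc_def by simp
      ultimately show ?thesis by linarith
    qed
  qed
  moreover have "n \<le> n * ?L" using L1 by simp
  ultimately show ?thesis unfolding cw_def using word_length_eq[OF altW] by simp
qed


lemma dc_sm: "dc x y \<Longrightarrow> y \<in> carrier G \<Longrightarrow> sm x y"
  unfolding dc_def
proof (elim bexE)
  fix c1 c2 assume y: "y \<in> carrier G" and c: "c1 \<in> C" "c2 \<in> C" and x: "x = c1 \<otimes> y \<otimes> c2"
  have "sm (c1 \<otimes> y \<otimes> c2) (c1 \<otimes> y)" using sm_mult_right c y C_carr by (meson m_closed subsetD)
  moreover have "sm (c1 \<otimes> y) y" using sm_mult_left c y by blast
  ultimately show "sm x y" using x sm_trans by blast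
qed

lemma dc_parity: "dc x y \<Longrightarrow> x \<in> A - C \<Longrightarrow> y \<in> B - C \<Longrightarrow> False"
  using dc_sm[of x y] B_carr unfolding sm_def Cdef by blast

end

fun il :: "'a list \<Rightarrow> 'a list \<Rightarrow> 'a list" where
  "il (x # xs) (y # ys) = x # y # il xs ys"
| "il _ _ = []"

lemma il_append: "length xs = length ys \<Longrightarrow> il (xs @ xs') (ys @ ys') = il xs ys @ il xs' ys'"
  by (induction xs ys rule: list_induct2) auto

lemma length_il: "length xs = length ys \<Longrightarrow> length (il xs ys) = 2 * length xs"
  by (induction xs ys rule: list_induct2) auto

lemma il_nth: "length xs = length ys \<Longrightarrow> r < length xs \<Longrightarrow>
   il xs ys ! (2 * r) = xs ! r \<and> il xs ys ! (2 * r + 1) = ys ! r"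
proof (induction xs ys arbitrary: r rule: list_induct2)
  case Nil then show ?case by simp
next
  case (Cons x xs y ys)
  then show ?case by (cases r) auto
qed

lemma wpow_pair: "wpow [x, y] N = il (replicate N x) (replicate N y)"
  by (induction N) (auto simp: wpow_Suc)

lemma wpow_nth: "m < n * length u \<Longrightarrow> wpow u n ! m = u ! (m mod length u)"
proof (induction n arbitrary: m)
  case 0 then show ?case by simp
next
  case (Suc n)
  show ?case
  proof (cases "m < length u")
    case True then show ?thesis by (simp add: wpow_Suc nth_append)
  next
    case False
    then have "m - length u < n * length u" using Suc.prems by simp
    then have "wpow u n ! (m - length u) = u ! ((m - length u) mod length u)" using Suc.IH by blast
    moreover have "(m - length u) mod length u = m mod length u" using False by (simp add: le_mod_geq)
    ultimately show ?thesis using False by (simp add: wpow_Suc nth_append)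
  qed
qed

definition par :: "'a set \<Rightarrow> 'a set \<Rightarrow> 'a list \<Rightarrow> bool" where
  "par P Q W \<longleftrightarrow> (\<forall>k<length W. (even k \<longrightarrow> W ! k \<in> P) \<and> (odd k \<longrightarrow> W ! k \<in> Q))"

lemma par_il: "length xs = length ys \<Longrightarrow> set xs \<subseteq> P \<Longrightarrow> set ys \<subseteq> Q \<Longrightarrow> par P Q (il xs ys)"
  unfolding par_def
proof (intro allI impI conjI)
  fix k assume l: "length xs = length ys" and P: "set xs \<subseteq> P" and Q: "set ys \<subseteq> Q"
    and k: "k < length (il xs ys)"
  have k2: "k < 2 * length xs" using k length_il[OF l] by simp
  show "even k \<Longrightarrow> il xs ys ! k \<in> P"
  proof -
    assume "even k"
    then obtain r where r: "k = 2 * r" by blast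
    then have "r < length xs" using k2 by simp
    then show ?thesis using il_nth[OF l] r P by (metis nth_mem subsetD)
  qed
  show "odd k \<Longrightarrow> il xs ys ! k \<in> Q"
  proof -
    assume "odd k"
    then obtain r where r: "k = 2 * r + 1" by (metis oddE)
    then have "r < length xs" using k2 by simp
    then show ?thesis using il_nth[OF l] r Q l by (metis nth_mem subsetD)
  qed
qed

lemma par_wpow: assumes "par P Q W" "even (length W)" shows "par P Q (wpow W n)"
  unfolding par_def
proof (intro allI impI conjI)
  fix k assume k: "k < length (wpow W n)"
  then have k': "k < n * length W" by simp
  then have Wne: "length W > 0" by (cases "length W") auto
  have e: "wpow W n ! k = W ! (k mod length W)" using wpow_nth[OF k'] .
  have km: "k mod length W < length W" using Wne by simp
  have par_eq: "even (k mod length W) \<longleftrightarrow> even k"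
  proof -
    have d: "k = length W * (k div length W) + k mod length W" by simp
    have "even (length W * (k div length W))" using assms(2) by simp
    then show ?thesis by (metis d even_add)
  qed
  show "even k \<Longrightarrow> wpow W n ! k \<in> P" using assms(1) km e par_eq unfolding par_def by auto
  show "odd k \<Longrightarrow> wpow W n ! k \<in> Q" using assms(1) km e par_eq unfolding par_def by auto
qed

lemma word_inv_nth: "k < length W \<Longrightarrow> word_inv G W ! k = inv\<^bsub>G\<^esub> (W ! (length W - Suc k))"
  by (simp add: word_inv_def rev_nth)


locale conc = amal G A B C for G :: "('g, 'b) monoid_scheme" (structure) and A B C +
  fixes a1 a2 b :: 'g
  assumes a1: "a1 \<in> A - C" and a2: "a2 \<in> A - C"
    and a2dc: "a2 \<notin> {c \<otimes> a1 \<otimes> c' | c c'. c \<in> C \<and> c' \<in> C}"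
    and b: "b \<in> B - C"
begin

definition As :: "nat \<Rightarrow> 'g list" where
  "As N = replicate N a1 @ replicate N (inv a1) @ replicate N a2 @ replicate N (inv a2) @
     replicate (4*N) a1 @ replicate (4*N) (inv a1) @ replicate (4*N) a2 @ replicate (4*N) (inv a2)"

definition Bs :: "nat \<Rightarrow> 'g list" where
  "Bs N = replicate N b @ replicate N (inv b) @ replicate N b @ replicate N (inv b) @
     replicate (4*N) b @ replicate (4*N) (inv b) @ replicate (4*N) b @ replicate (4*N) (inv b)"

lemma a1c: "a1 \<in> carrier G" and a2c: "a2 \<in> carrier G" and bc: "b \<in> carrier G"
  using a1 a2 b A_carr B_carr by auto

lemma inv_AC: "x \<in> A - C \<Longrightarrow> inv x \<in> A - C"
  using sub_inv_iff[OF subA] inv_C A_carr by (metis DiffD1 DiffD2 DiffI inv_inv subsetD)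
lemma inv_BC: "x \<in> B - C \<Longrightarrow> inv x \<in> B - C"
  using sub_inv_iff[OF subB] inv_C B_carr by (metis DiffD1 DiffD2 DiffI inv_inv subsetD)

lemma len_As[simp]: "length (As N) = 20 * N" by (simp add: As_def)
lemma len_Bs[simp]: "length (Bs N) = 20 * N" by (simp add: Bs_def)
lemma rep_sub: "x \<in> S \<Longrightarrow> set (replicate n x) \<subseteq> S" by (induction n) auto

lemma set_As: "set (As N) \<subseteq> A - C"
proof -
  have "inv a1 \<in> A - C" "inv a2 \<in> A - C" using a1 a2 inv_AC by auto
  then show ?thesis using a1 a2 unfolding As_def by (simp del: Diff_iff add: rep_sub)
qed
lemma set_Bs: "set (Bs N) \<subseteq> B - C"
proof -
  have "inv b \<in> B - C" using b inv_BC by auto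
  then show ?thesis using b unfolding Bs_def by (simp del: Diff_iff add: rep_sub)
qed

lemma As_nth: "r < 20 * N \<Longrightarrow> As N ! r =
  (if r < N then a1 else if r < 2*N then inv a1 else if r < 3*N then a2 else if r < 4*N then inv a2
   else if r < 8*N then a1 else if r < 12*N then inv a1 else if r < 16*N then a2 else inv a2)"
proof -
  assume r: "r < 20 * N"
  consider "r < N" | "N \<le> r \<and> r < 2*N" | "2*N \<le> r \<and> r < 3*N" | "3*N \<le> r \<and> r < 4*N"
    | "4*N \<le> r \<and> r < 8*N" | "8*N \<le> r \<and> r < 12*N" | "12*N \<le> r \<and> r < 16*N" | "16*N \<le> r" by linarith
  then show ?thesis
    by cases (use r in \<open>auto simp: As_def nth_append\<close>)
qed

lemma w_eq: "w_word G a1 a2 b i = il (As (10^i)) (Bs (10^i))"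
  by (simp add: w_word_def Let_def wpow_pair As_def Bs_def il_append)

lemma bad_aux: assumes "dc a1 a2" shows False
proof -
  obtain c1 c2 where c: "c1 \<in> C" "c2 \<in> C" "a1 = c1 \<otimes> a2 \<otimes> c2" using assms dc_def by blast
  have cc: "c1 \<in> carrier G" "c2 \<in> carrier G" using c C_carr by auto
  have "inv c1 \<otimes> a1 \<otimes> inv c2 = inv c1 \<otimes> (c1 \<otimes> a2 \<otimes> c2) \<otimes> inv c2" using c by simp
  also have "\<dots> = a2" using cc a2c by (simp add: m_assoc[symmetric]) (simp add: m_assoc)
  finally have "a2 = inv c1 \<otimes> a1 \<otimes> inv c2" by simp
  then show False using a2dc inv_C c by blast
qed

lemma bad: "\<not> dc a2 a1" "\<not> dc a1 a2" "\<not> dc (inv a1) (inv a2)" "\<not> dc (inv a2) (inv a1)"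
proof -
  show "\<not> dc a2 a1" using a2dc unfolding dc_def by blast
  show "\<not> dc a1 a2" using bad_aux by blast
  show "\<not> dc (inv a1) (inv a2)"
  proof
    assume "dc (inv a1) (inv a2)"
    then obtain c1 c2 where c: "c1 \<in> C" "c2 \<in> C" "inv a1 = c1 \<otimes> inv a2 \<otimes> c2" using dc_def by blast
    have cc: "c1 \<in> carrier G" "c2 \<in> carrier G" using c C_carr by auto
    have "a1 = inv (inv a1)" using a1c by simp
    also have "\<dots> = inv c2 \<otimes> a2 \<otimes> inv c1" using c cc a2c by (simp add: inv_mult_group m_assoc)
    finally show False using bad_aux inv_C c unfolding dc_def by blast
  qed
  show "\<not> dc (inv a2) (inv a1)"
  proof
    assume "dc (inv a2) (inv a1)"
    then obtain c1 c2 where c: "c1 \<in> C" "c2 \<in> C" "inv a2 = c1 \<otimes> inv a1 \<otimes> c2" using dc_def by blast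
    have cc: "c1 \<in> carrier G" "c2 \<in> carrier G" using c C_carr by auto
    have "a2 = inv (inv a2)" using a2c by simp
    also have "\<dots> = inv c2 \<otimes> a1 \<otimes> inv c1" using c cc a1c by (simp add: inv_mult_group m_assoc)
    finally show False using a2dc inv_C c by blast
  qed
qed

lemma As_blk:
  "r < N \<Longrightarrow> As N ! r = a1"
  "N \<le> r \<Longrightarrow> r < 2*N \<Longrightarrow> As N ! r = inv a1"
  "2*N \<le> r \<Longrightarrow> r < 3*N \<Longrightarrow> As N ! r = a2"
  "3*N \<le> r \<Longrightarrow> r < 4*N \<Longrightarrow> As N ! r = inv a2"
  "4*N \<le> r \<Longrightarrow> r < 8*N \<Longrightarrow> As N ! r = a1"
  "8*N \<le> r \<Longrightarrow> r < 12*N \<Longrightarrow> As N ! r = inv a1"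
  "12*N \<le> r \<Longrightarrow> r < 16*N \<Longrightarrow> As N ! r = a2"
  "16*N \<le> r \<Longrightarrow> r < 20*N \<Longrightarrow> As N ! r = inv a2"
  by (simp_all add: As_nth)

lemma pat2: assumes N: "N \<ge> 1"
  and H: "\<forall>r<20*N. dc (inv (As N ! (20*N - 1 - r))) (As N ! ((s + r) mod (20*N)))"
  shows False
proof -
  define u where "u = s mod (20*N)"
  have u: "u < 20*N" using N u_def by simp
  have m: "(s + r) mod (20*N) = (u + r) mod (20*N)" for r unfolding u_def by (simp add: mod_add_left_eq)
  have H': "dc (inv (As N ! (20*N - 1 - r))) (As N ! ((u + r) mod (20*N)))" if "r < 20*N" for r
    using H that m by simp
  consider "u < N" | "N \<le> u \<and> u < 4*N" | "4*N \<le> u \<and> u < 8*N" | "8*N \<le> u \<and> u < 12*N" | "12*N \<le> u \<and> u < 14*N" | "14*N \<le> u \<and> u < 17*N" | "17*N \<le> u" using u by linarith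
  then show False
  proof cases
    case 1
    define r :: nat where "r = 0"
    have r: "r < 20*N" using 1 u N unfolding r_def by linarith
    have ur: "u + r = u" using 1 u N unfolding r_def by linarith
    have tm: "(u + r) mod (20*N) = u" unfolding ur using N u by simp
    define j where "j = 20*N - 1 - r"
    have j: "16*N \<le> j" "j < 20*N" using 1 u N unfolding j_def r_def by linarith+
    have bj: "As N ! j = inv a2" using As_blk(8)[OF j] .
    have tv: "As N ! (u) = a1" using 1 u N by (intro As_blk(1)) linarith+
    have "dc (inv (As N ! j)) (As N ! (u))" using H'[OF r] tm j_def by simp
    then have "dc (a2) (a1)" using bj tv a1c a2c by simp
    then show False using bad(1) by blast
  next
    case 2
    define r :: nat where "r = 4*N - u"
    have r: "r < 20*N" using 2 u N unfolding r_def by linarith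
    have ur: "u + r = 4*N" using 2 u N unfolding r_def by linarith
    have tm: "(u + r) mod (20*N) = 4*N" unfolding ur using N u by simp
    define j where "j = 20*N - 1 - r"
    have j: "16*N \<le> j" "j < 20*N" using 2 u N unfolding j_def r_def by linarith+
    have bj: "As N ! j = inv a2" using As_blk(8)[OF j] .
    have tv: "As N ! (4*N) = a1" using 2 u N by (intro As_blk(5)) linarith+
    have "dc (inv (As N ! j)) (As N ! (4*N))" using H'[OF r] tm j_def by simp
    then have "dc (a2) (a1)" using bj tv a1c a2c by simp
    then show False using bad(1) by blast
  next
    case 3
    define r :: nat where "r = 0"
    have r: "r < 20*N" using 3 u N unfolding r_def by linarith
    have ur: "u + r = u" using 3 u N unfolding r_def by linarith
    have tm: "(u + r) mod (20*N) = u" unfolding ur using N u by simp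
    define j where "j = 20*N - 1 - r"
    have j: "16*N \<le> j" "j < 20*N" using 3 u N unfolding j_def r_def by linarith+
    have bj: "As N ! j = inv a2" using As_blk(8)[OF j] .
    have tv: "As N ! (u) = a1" using 3 u N by (intro As_blk(5)) linarith+
    have "dc (inv (As N ! j)) (As N ! (u))" using H'[OF r] tm j_def by simp
    then have "dc (a2) (a1)" using bj tv a1c a2c by simp
    then show False using bad(1) by blast
  next
    case 4
    define r :: nat where "r = 24*N - 1 - u"
    have r: "r < 20*N" using 4 u N unfolding r_def by linarith
    have ur: "u + r = (4*N - 1) + 20*N" using 4 u N unfolding r_def by linarith
    have tm: "(u + r) mod (20*N) = 4*N - 1" unfolding ur mod_add_self2 using N u by (intro mod_less) linarith
    define j where "j = 20*N - 1 - r"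
    have j: "4*N \<le> j" "j < 8*N" using 4 u N unfolding j_def r_def by linarith+
    have bj: "As N ! j = a1" using As_blk(5)[OF j] .
    have tv: "As N ! (4*N - 1) = inv a2" using 4 u N by (intro As_blk(4)) linarith+
    have "dc (inv (As N ! j)) (As N ! (4*N - 1))" using H'[OF r] tm j_def by simp
    then have "dc (inv a1) (inv a2)" using bj tv a1c a2c by simp
    then show False using bad(3) by blast
  next
    case 5
    define r :: nat where "r = 22*N - u"
    have r: "r < 20*N" using 5 u N unfolding r_def by linarith
    have ur: "u + r = (2*N) + 20*N" using 5 u N unfolding r_def by linarith
    have tm: "(u + r) mod (20*N) = 2*N" unfolding ur mod_add_self2 using N u by (intro mod_less) linarith
    define j where "j = 20*N - 1 - r"
    have j: "8*N \<le> j" "j < 12*N" using 5 u N unfolding j_def r_def by linarith+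
    have bj: "As N ! j = inv a1" using As_blk(6)[OF j] .
    have tv: "As N ! (2*N) = a2" using 5 u N by (intro As_blk(3)) linarith+
    have "dc (inv (As N ! j)) (As N ! (2*N))" using H'[OF r] tm j_def by simp
    then have "dc (a1) (a2)" using bj tv a1c a2c by simp
    then show False using bad(2) by blast
  next
    case 6
    define r :: nat where "r = 21*N - u"
    have r: "r < 20*N" using 6 u N unfolding r_def by linarith
    have ur: "u + r = (N) + 20*N" using 6 u N unfolding r_def by linarith
    have tm: "(u + r) mod (20*N) = N" unfolding ur mod_add_self2 using N u by (intro mod_less) linarith
    define j where "j = 20*N - 1 - r"
    have j: "12*N \<le> j" "j < 16*N" using 6 u N unfolding j_def r_def by linarith+
    have bj: "As N ! j = a2" using As_blk(7)[OF j] .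
    have tv: "As N ! (N) = inv a1" using 6 u N by (intro As_blk(2)) linarith+
    have "dc (inv (As N ! j)) (As N ! (N))" using H'[OF r] tm j_def by simp
    then have "dc (inv a2) (inv a1)" using bj tv a1c a2c by simp
    then show False using bad(4) by blast
  next
    case 7
    define r :: nat where "r = 20*N - u"
    have r: "r < 20*N" using 7 u N unfolding r_def by linarith
    have ur: "u + r = (0) + 20*N" using 7 u N unfolding r_def by linarith
    have tm: "(u + r) mod (20*N) = 0" unfolding ur mod_add_self2 using N u by (intro mod_less) linarith
    define j where "j = 20*N - 1 - r"
    have j: "16*N \<le> j" "j < 20*N" using 7 u N unfolding j_def r_def by linarith+
    have bj: "As N ! j = inv a2" using As_blk(8)[OF j] .
    have tv: "As N ! (0) = a1" using 7 u N by (intro As_blk(1)) linarith+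
    have "dc (inv (As N ! j)) (As N ! (0))" using H'[OF r] tm j_def by simp
    then have "dc (a2) (a1)" using bj tv a1c a2c by simp
    then show False using bad(1) by blast
  qed
qed


lemma exists_mod: assumes P: "(P::nat) > 0" and c: "c < P"
  shows "\<exists>r. R0 \<le> r \<and> r < R0 + P \<and> (s + r) mod P = c"
proof -
  define d where "d = (s + R0) mod P"
  have d: "d < P" using P d_def by simp
  define x where "x = (c + P - d) mod P"
  have x: "x < P" using P x_def by simp
  have "(s + (R0 + x)) mod P = ((s + R0) + x) mod P" by (simp add: add.assoc)
  also have "\<dots> = (d + x) mod P" unfolding d_def by (simp add: mod_add_left_eq)
  also have "\<dots> = (d + (c + P - d)) mod P" unfolding x_def by (simp add: mod_add_right_eq)
  also have "d + (c + P - d) = c + P" using d by simp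
  also have "(c + P) mod P = c" using c by simp
  finally show ?thesis using x by (intro exI[of _ "R0 + x"]) simp
qed

lemma pat3: assumes N: "N \<ge> 1" and N': "N' \<ge> 10 * N"
  and H: "\<forall>r<20*N' - 1. dc (As N' ! (r + 1)) (As N ! ((s + r) mod (20*N)))"
  shows False
proof -
  obtain r where r: "4*N' \<le> r" "r < 4*N' + 20*N" "(s + r) mod (20*N) = 2*N"
    using exists_mod[of "20*N" "2*N" "4*N'" s] N by auto
  have rl: "r < 20*N' - 1" using r N N' by linarith
  have "dc (As N' ! (r + 1)) (As N ! (2*N))" using H rl r(3) by metis
  moreover have "As N' ! (r + 1) = a1" using r N N' by (intro As_blk(5)) linarith+
  moreover have "As N ! (2*N) = a2" using N by (intro As_blk(3)) linarith+
  ultimately show False using bad(2) by simp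
qed

lemma pat4: assumes N: "N \<ge> 1" and N': "N' \<ge> 10 * N"
  and H: "\<forall>r<20*N'. dc (inv (As N' ! (20*N' - 1 - r))) (As N ! ((s + r) mod (20*N)))"
  shows False
proof -
  obtain r where r: "0 \<le> r" "r < 0 + 20*N" "(s + r) mod (20*N) = 0"
    using exists_mod[of "20*N" 0 0 s] N by auto
  have rl: "r < 20*N'" using r N N' by linarith
  have "dc (inv (As N' ! (20*N' - 1 - r))) (As N ! 0)" using H rl r(3) by metis
  moreover have "As N' ! (20*N' - 1 - r) = inv a2" using r N N' by (intro As_blk(8)) linarith+
  moreover have "As N ! 0 = a1" using N by (intro As_blk(1)) linarith+
  ultimately show False using bad(1) a2c by simp
qed


abbreviation "Wd N \<equiv> il (As N) (Bs N)"

lemma len_Wd[simp]: "length (Wd N) = 40 * N" using length_il[of "As N" "Bs N"] by simp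

lemma Wd_even: "r < 20 * N \<Longrightarrow> Wd N ! (2 * r) = As N ! r"
  using il_nth[of "As N" "Bs N" r] by simp

lemma par_Wd: "par (A - C) (B - C) (Wd N)"
  using par_il[of "As N" "Bs N"] set_As set_Bs by simp

lemma Wn_even: assumes "2 * h < n * (40 * N)"
  shows "wpow (Wd N) n ! (2 * h) = As N ! (h mod (20 * N))"
proof -
  have N: "N > 0" using assms by (cases N) auto
  have "wpow (Wd N) n ! (2 * h) = Wd N ! ((2 * h) mod (40 * N))" using wpow_nth[of "2*h" n "Wd N"] assms by simp
  also have "(2 * h) mod (40 * N) = 2 * (h mod (20 * N))"
    using mult_mod_right[of 2 h "20 * N"] by simp
  also have "Wd N ! (2 * (h mod (20 * N))) = As N ! (h mod (20 * N))" using N by (intro Wd_even) simp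
  finally show ?thesis .
qed

lemma par_Wn: "par (A - C) (B - C) (wpow (Wd N) n)"
  using par_wpow[OF par_Wd] by simp

lemma Wn_parity: assumes "dc x (wpow (Wd N) n ! m)" "x \<in> A - C" "m < length (wpow (Wd N) n)"
  shows "even m"
proof (rule ccontr)
  assume "odd m"
  then have "wpow (Wd N) n ! m \<in> B - C" using par_Wn[of N n] assms(3) unfolding par_def by blast
  then show False using dc_parity assms by blast
qed

lemma patfree_fwd: assumes N: "N \<ge> 1" and N': "N' \<ge> 2"
  and np: "\<And>s. \<not> (\<forall>r<20*N' - 1. dc (As N' ! (r + 1)) (As N ! ((s + r) mod (20*N))))"
  shows "patfree (tl (Wd N')) (wpow (Wd N) n)"
  unfolding patfree_def
proof
  let ?T = "tl (Wd N')" and ?Wn = "wpow (Wd N) n"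
  assume "\<exists>q. q + length ?T \<le> length ?Wn \<and> (\<forall>k<length ?T. dc (?T ! k) (?Wn ! (q + k)))"
  then obtain q where q: "q + length ?T \<le> length ?Wn" and H: "\<forall>k<length ?T. dc (?T ! k) (?Wn ! (q + k))"
    by blast
  have lT: "length ?T = 40 * N' - 1" by simp
  have Tk: "?T ! k = Wd N' ! Suc k" if "k < length ?T" for k using that by (simp add: nth_tl)
  have T1: "?T ! 1 = a1"
  proof -
    have "?T ! 1 = Wd N' ! (2 * 1)" using N' by (simp add: nth_tl numeral_2_eq_2)
    also have "\<dots> = As N' ! 1" using N' by (intro Wd_even) simp
    also have "\<dots> = a1" using N' by (intro As_blk(1)) simp
    finally show ?thesis .
  qed
  have k1: "1 < length ?T" using lT N' by linarith
  have "dc (?T ! 1) (?Wn ! (q + 1))" using H k1 by blast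
  then have d1: "dc a1 (?Wn ! (q + 1))" using T1 by simp
  have "q + 1 < length ?Wn" using q k1 by linarith
  then have "even (q + 1)" using Wn_parity[OF d1 a1] by blast
  then obtain s where s: "q + 1 = 2 * s" by blast
  have "\<forall>r<20*N' - 1. dc (As N' ! (r + 1)) (As N ! ((s + r) mod (20*N)))"
  proof (intro allI impI)
    fix r assume r: "r < 20*N' - 1"
    have k: "2 * r + 1 < length ?T" using r lT by linarith
    have "?T ! (2 * r + 1) = Wd N' ! (2 * (r + 1))" using Tk[OF k] by simp
    also have "\<dots> = As N' ! (r + 1)" using r by (intro Wd_even) linarith
    finally have e1: "?T ! (2 * r + 1) = As N' ! (r + 1)" .
    have qk: "q + (2 * r + 1) = 2 * (s + r)" using s by simp
    have "2 * (s + r) < n * (40 * N)" using q k qk by simp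
    then have "?Wn ! (2 * (s + r)) = As N ! ((s + r) mod (20 * N))" by (rule Wn_even)
    then have e2: "?Wn ! (q + (2 * r + 1)) = As N ! ((s + r) mod (20 * N))" by (simp only: qk)
    show "dc (As N' ! (r + 1)) (As N ! ((s + r) mod (20*N)))" using H k e1 e2 by metis
  qed
  then show False using np by blast
qed


lemma patfree_inv: assumes N: "N \<ge> 1" and N': "N' \<ge> 1"
  and np: "\<And>s. \<not> (\<forall>r<20*N'. dc (inv (As N' ! (20*N' - 1 - r))) (As N ! ((s + r) mod (20*N))))"
  shows "patfree (tl (word_inv G (Wd N'))) (wpow (Wd N) n)"
  unfolding patfree_def
proof
  let ?T = "tl (word_inv G (Wd N'))" and ?Wn = "wpow (Wd N) n"
  assume "\<exists>q. q + length ?T \<le> length ?Wn \<and> (\<forall>k<length ?T. dc (?T ! k) (?Wn ! (q + k)))"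
  then obtain q where q: "q + length ?T \<le> length ?Wn" and H: "\<forall>k<length ?T. dc (?T ! k) (?Wn ! (q + k))"
    by blast
  have lT: "length ?T = 40 * N' - 1" by (simp add: word_inv_def)
  have Tev: "?T ! (2 * r) = inv (As N' ! (20 * N' - 1 - r))" if r: "r < 20 * N'" for r
  proof -
    have "?T ! (2 * r) = word_inv G (Wd N') ! Suc (2 * r)" using r by (simp add: nth_tl word_inv_def)
    also have "\<dots> = inv (Wd N' ! (40 * N' - Suc (Suc (2 * r))))" using r by (subst word_inv_nth) simp_all
    also have "40 * N' - Suc (Suc (2 * r)) = 2 * (20 * N' - 1 - r)" using r by simp
    also have "Wd N' ! (2 * (20 * N' - 1 - r)) = As N' ! (20 * N' - 1 - r)" using r by (intro Wd_even) simp
    finally show ?thesis .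
  qed
  have T0: "?T ! 0 = a2"
  proof -
    have "?T ! (2 * 0) = inv (As N' ! (20 * N' - 1 - 0))" using N' by (intro Tev) simp
    moreover have "As N' ! (20 * N' - 1 - 0) = inv a2" using N' by (intro As_blk(8)) simp_all
    ultimately show ?thesis using a2c by simp
  qed
  have k0: "0 < length ?T" using lT N' by linarith
  have "dc (?T ! 0) (?Wn ! (q + 0))" using H k0 by blast
  then have d0: "dc a2 (?Wn ! q)" using T0 by simp
  have "q < length ?Wn" using q k0 by linarith
  then have "even q" using Wn_parity[OF d0 a2] by blast
  then obtain s where s: "q = 2 * s" by blast
  have "\<forall>r<20*N'. dc (inv (As N' ! (20*N' - 1 - r))) (As N ! ((s + r) mod (20*N)))"
  proof (intro allI impI)
    fix r assume r: "r < 20*N'"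
    have k: "2 * r < length ?T" using r lT by linarith
    have qk: "q + 2 * r = 2 * (s + r)" using s by simp
    have "2 * (s + r) < n * (40 * N)" using q k qk by simp
    then have "?Wn ! (2 * (s + r)) = As N ! ((s + r) mod (20 * N))" by (rule Wn_even)
    then have e2: "?Wn ! (q + 2 * r) = As N ! ((s + r) mod (20 * N))" by (simp only: qk)
    show "dc (inv (As N' ! (20*N' - 1 - r))) (As N ! ((s + r) mod (20*N)))"
      using H k e2 Tev[OF r] by metis
  qed
  then show False using np by blast
qed


lemma ok_AB: "x \<in> A - C \<Longrightarrow> y \<in> B - C \<Longrightarrow> ok x y" and ok_BA: "x \<in> B - C \<Longrightarrow> y \<in> A - C \<Longrightarrow> ok x y"
  unfolding ok_def Cdef by auto

lemma par_alt: assumes "par P Q W" "(P = A - C \<and> Q = B - C) \<or> (P = B - C \<and> Q = A - C)"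
  shows "alternating A B C W"
  unfolding alt_nth
proof (rule conjI; intro allI impI)
  fix i assume "i < length W"
  then show "W ! i \<in> Ls" using assms unfolding par_def Ls_def by (cases "even i") auto
next
  fix i assume i: "Suc i < length W"
  show "ok (W ! i) (W ! Suc i)"
  proof (cases "even i")
    case True
    then have "W ! i \<in> P" "W ! Suc i \<in> Q" using assms(1) i unfolding par_def by auto
    then show ?thesis using assms(2) ok_AB ok_BA by blast
  next
    case False
    then have "W ! i \<in> Q" "W ! Suc i \<in> P" using assms(1) i unfolding par_def by auto
    then show ?thesis using assms(2) ok_AB ok_BA by blast
  qed
qed

lemma par_word_inv: assumes "par (A - C) (B - C) W" "even (length W)"
  shows "par (B - C) (A - C) (word_inv G W)"
  unfolding par_def
proof (intro allI impI conjI)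
  fix k assume k: "k < length (word_inv G W)"
  then have k': "k < length W" by (simp add: word_inv_def)
  have e: "word_inv G W ! k = inv (W ! (length W - Suc k))" using word_inv_nth[OF k'] .
  have idx: "length W - Suc k < length W" using k' by simp
  have pe: "even (length W - Suc k) \<longleftrightarrow> odd k" using assms(2) k' by (simp add: even_diff_nat)
  show "even k \<Longrightarrow> word_inv G W ! k \<in> B - C"
    using assms(1) idx pe e inv_BC unfolding par_def by auto
  show "odd k \<Longrightarrow> word_inv G W ! k \<in> A - C"
    using assms(1) idx pe e inv_AC unfolding par_def by auto
qed

lemma par_hd_last: assumes "par P Q W" "(P = A - C \<and> Q = B - C) \<or> (P = B - C \<and> Q = A - C)"
  "even (length W)" "length W \<ge> 2"
  shows "W = hd W # tl W" "tl W \<noteq> []" "ok (hd W) (last (tl W))"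
proof -
  show W: "W = hd W # tl W" using assms(4) by (cases W) auto
  show "tl W \<noteq> []" using assms(4) by (cases W) auto
  have "hd W = W ! 0" using assms(4) by (cases W) auto
  moreover have "0 < length W" using assms(4) by linarith
  ultimately have h: "hd W \<in> P" using assms(1) unfolding par_def by auto
  have tne: "tl W \<noteq> []" and wne: "W \<noteq> []" using assms(4) by (cases W; auto)+
  have "last (tl W) = last W" using tne by (intro last_tl) simp
  also have "last W = W ! (length W - 1)" using wne by (rule last_conv_nth)
  finally have "last (tl W) = W ! (length W - 1)" .
  moreover have "odd (length W - 1)" using assms(3,4) wne by simp
  moreover have "length W - 1 < length W" using assms(4) by linarith
  ultimately have "last (tl W) \<in> Q" using assms(1) unfolding par_def by auto
  then show "ok (hd W) (last (tl W))" using h assms(2) ok_AB ok_BA by blast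
qed

lemma Wd_props: assumes "N \<ge> 1"
  shows "alternating A B C (wpow (Wd N) n)" "Wd N \<noteq> []"
proof -
  show "alternating A B C (wpow (Wd N) n)" using par_alt[OF par_Wn] by simp
  show "Wd N \<noteq> []" using assms by (metis len_Wd list.size(3) mult_is_0 not_one_le_zero zero_neq_numeral)
qed

lemma claim1: "N \<ge> 1 \<Longrightarrow> cw G ((A \<union> B) - {\<one>}) (Wd N) (word_eval G (wpow (Wd N) n)) = int n"
  using cw_n Wd_props by blast

lemma claim_fwd: assumes N: "N \<ge> 1" and N': "N' \<ge> 10 * N"
  shows "cw G ((A \<union> B) - {\<one>}) (Wd N') (word_eval G (wpow (Wd N) n)) = 0"
proof -
  have N2: "N' \<ge> 2" using N N' by linarith
  have pc: "(A - C = A - C \<and> B - C = B - C) \<or> (A - C = B - C \<and> B - C = A - C)" by simp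
  note hl = par_hd_last[OF par_Wd pc, of N']
  have ev: "even (length (Wd N'))" by simp
  have l2: "length (Wd N') \<ge> 2" using N2 by simp
  have altW': "alternating A B C (Wd N')" using par_alt[OF par_Wd pc] .
  have pf: "patfree (tl (Wd N')) (wpow (Wd N) n)"
    using patfree_fwd[OF N N2] pat3[OF N N'] by blast
  have "cw G ((A \<union> B) - {\<one>}) (hd (Wd N') # tl (Wd N')) (word_eval G (wpow (Wd N) n)) = 0"
    using cw_zero[OF Wd_props(1)[OF N] hl(2)[OF ev l2] _ hl(3)[OF ev l2] pf] altW' hl(1)[OF ev l2] by simp
  then show ?thesis using hl(1)[OF ev l2] by simp
qed

lemma claim_inv: assumes N: "N \<ge> 1" and N': "N' \<ge> 1"
  and np: "\<And>s. \<not> (\<forall>r<20*N'. dc (inv (As N' ! (20*N' - 1 - r))) (As N ! ((s + r) mod (20*N))))"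
  shows "cw G ((A \<union> B) - {\<one>}) (word_inv G (Wd N')) (word_eval G (wpow (Wd N) n)) = 0"
proof -
  let ?V = "word_inv G (Wd N')"
  have pc: "(B - C = A - C \<and> A - C = B - C) \<or> (B - C = B - C \<and> A - C = A - C)" by simp
  have ev: "even (length ?V)" by (simp add: word_inv_def)
  have l2: "length ?V \<ge> 2" using N' by (simp add: word_inv_def)
  have pV: "par (B - C) (A - C) ?V" using par_word_inv[OF par_Wd] by simp
  note hl = par_hd_last[OF pV pc ev l2]
  have altV: "alternating A B C ?V" using par_alt[OF pV pc] .
  have pf: "patfree (tl ?V) (wpow (Wd N) n)" using patfree_inv[OF N N' np] by blast
  have "cw G ((A \<union> B) - {\<one>}) (hd ?V # tl ?V) (word_eval G (wpow (Wd N) n)) = 0"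
    using cw_zero[OF Wd_props(1)[OF N] hl(2) _ hl(3) pf] altV hl(1) by simp
  then show ?thesis using hl(1) by simp
qed

lemma claim2: "N \<ge> 1 \<Longrightarrow> cw G ((A \<union> B) - {\<one>}) (word_inv G (Wd N)) (word_eval G (wpow (Wd N) n)) = 0"
  using claim_inv pat2 by blast

lemma claim4: "N \<ge> 1 \<Longrightarrow> N' \<ge> 10 * N \<Longrightarrow>
    cw G ((A \<union> B) - {\<one>}) (word_inv G (Wd N')) (word_eval G (wpow (Wd N) n)) = 0"
proof -
  assume N: "N \<ge> 1" and N': "N' \<ge> 10 * N"
  have "N' \<ge> 1" using N N' by linarith
  then show ?thesis using claim_inv[OF N] pat4[OF N N'] by blast
qed

end

lemma pow10_ge: "(i::nat) < j \<Longrightarrow> 10 * 10 ^ i \<le> (10::nat) ^ j"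
proof -
  assume "i < j"
  then have "Suc i \<le> j" by simp
  then have "(10::nat) ^ Suc i \<le> 10 ^ j" by (rule power_increasing) simp
  then show ?thesis by simp
qed

theorem lemma4p3:
  fixes G :: "('g, 'b) monoid_scheme" and A B C :: "'g set" and a1 a2 b :: 'g
  assumes amalg: "amalgamated_product G A B C"
    and a1: "a1 \<in> A - C" and a2: "a2 \<in> A - C"
    and a2_dc: "a2 \<notin> {c \<otimes>\<^bsub>G\<^esub> a1 \<otimes>\<^bsub>G\<^esub> c' | c c'. c \<in> C \<and> c' \<in> C}"
    and b: "b \<in> B - C"
  defines "S \<equiv> (A \<union> B) - {\<one>\<^bsub>G\<^esub>}"
    and "w \<equiv> w_word G a1 a2 b"
  shows "(\<forall>n i. n \<ge> 1 \<longrightarrow> cw G S (w i) (word_eval G (wpow (w i) n)) = int n)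
       \<and> (\<forall>n i. n \<ge> 1 \<longrightarrow> cw G S (word_inv G (w i)) (word_eval G (wpow (w i) n)) = 0)
       \<and> (\<forall>n i j. n \<ge> 1 \<and> i < j \<longrightarrow> cw G S (w j) (word_eval G (wpow (w i) n)) = 0)
       \<and> (\<forall>n i j. n \<ge> 1 \<and> i < j \<longrightarrow> cw G S (word_inv G (w j)) (word_eval G (wpow (w i) n)) = 0)"
proof -
  have ap: "group G" "subgroup A G" "subgroup B G" "C = A \<inter> B"
    "\<And>gs. gs \<noteq> [] \<Longrightarrow> alternating A B C gs \<Longrightarrow> word_eval G gs \<noteq> \<one>\<^bsub>G\<^esub>"
    using amalg unfolding amalgamated_product_def by auto
  have am: "amal G A B C" using ap by (simp add: amal_def amal_axioms_def)
  interpret conc G A B C a1 a2 b using am a1 a2 a2_dc b by (simp add: conc_def conc_axioms_def)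
  have we: "w i = Wd (10 ^ i)" for i unfolding w_def by (rule w_eq)
  have N1: "(10::nat) ^ i \<ge> 1" for i by simp
  show ?thesis unfolding S_def we
    using claim1[OF N1] claim2[OF N1] claim_fwd[OF N1 pow10_ge] claim4[OF N1 pow10_ge] by blast
qed

end
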